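(* For each $k\in\mathbb N$, the class $\mathcal P_k$ is inner-product compatible: for all $\boldsymbol R,\boldsymbol S\in\mathcal P_k$ there exists $\boldsymbol Q\in\mathcal P_k$ such that the graph $\mathrm{tr}(\boldsymbol R^*\cdot\boldsymbol S)$ equals the underlying unlabelled graph of $\boldsymbol Q$.
   Context: A $(k,k)$-bilabelled graph is $\boldsymbol F=(F,\boldsymbol u,\boldsymbol v)$ with $\boldsymbol u,\boldsymbol v\in V(F)^k$; $F$ is its underlying graph. $\boldsymbol F^*=(F,\boldsymbol v,\boldsymbol u)$. $\mathrm{tr}(\boldsymbol F)$ is the unlabelled graph obtained from $F$ by identifying $u_i$ with $v_i$ for all $i$. Series composition $\boldsymbol F\cdot\boldsymbol F'$: disjoint union with $v_i$ identified with $u'_i$, multiple edges removed, labels $(\boldsymbol u,\boldsymbol v')$. Parallel composition $\boldsymbol F\odot\boldsymbol F'$: identify $u_i$ with $u'_i$ and $v_i$ with $v'_i$, multiple edges removed. For $\sigma\in\mathfrak S_{2k}$, $\boldsymbol F^\sigma$ has in-labels $(w_{\sigma(1)},\dots,w_{\sigma(k)})$ and out-labels $(w_{\sigma(k+1)},\dots,w_{\sigma(2k)})$, $\boldsymbol w=(u_1,\dots,u_k,v_1,\dots,v_k)$. $\mathscr C_k$ = cyclic group of rotations of the cyclic sequence $(1,\dots,k,2k,\dots,k+1)$. Bilabelled minors: via edge contraction, edge deletion, deletion of unlabelled vertices. $\boldsymbol C_k$: vertices $[2k]$, in-labels $(1,\dots,k)$, out-labels $(k+1,\dots,2k)$, edges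 $\{i,i+1\}$ ($i\in[2k]\setminus\{k,2k\}$), $\{1,k+1\},\{k,2k\}$; $\boldsymbol M_k$: same vertices/labels, edges $\{i,i+k\}$. $\mathcal Q_k^P,\mathcal Q_k^S$ = bilabelled minors of $\boldsymbol C_k,\boldsymbol M_k$; $\mathcal Q_k$ their union. $\mathcal P_k$ = smallest class of $(k,k)$-bilabelled graphs containing $\mathcal Q_k$, closed under series composition, under $\boldsymbol F\mapsto\boldsymbol F\odot\boldsymbol Q$ ($\boldsymbol Q\in\mathcal Q_k^P$), and under $\boldsymbol F\mapsto\boldsymbol F^\sigma$ ($\sigma\in\mathscr C_k$). *)

theory Defs
  imports Main
begin

text \<open>A bilabelled graph: finite vertex set, edge set (each edge is a nonempty set of at most
two vertices; a singleton is a loop; multiple edges are automatically merged since edges form a set),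
in-labels and out-labels (lists of vertices, not necessarily distinct).\<close>

record 'v bgr =
  bV :: "'v set"
  bE :: "'v set set"
  bin :: "'v list"
  bout :: "'v list"

definition wf_bgr :: "nat \<Rightarrow> 'v bgr \<Rightarrow> bool" where
  "wf_bgr k G \<longleftrightarrow> finite (bV G) \<and> (\<forall>e\<in>bE G. e \<noteq> {} \<and> e \<subseteq> bV G \<and> card e \<le> 2)
     \<and> length (bin G) = k \<and> length (bout G) = k \<and> set (bin G) \<subseteq> bV G \<and> set (bout G) \<subseteq> bV G"

definition quot :: "'a bgr \<Rightarrow> ('a \<times> 'a) set \<Rightarrow> ('a \<Rightarrow> 'b) \<Rightarrow> 'b bgr \<Rightarrow> bool" where
  "quot G P h H \<longleftrightarrow> P \<subseteq> bV G \<times> bV G \<and> bV H = h ` bV G \<and> bE H = (\<lambda>e. h ` e) ` bE G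
     \<and> bin H = map h (bin G) \<and> bout H = map h (bout G)
     \<and> (\<forall>x\<in>bV G. \<forall>y\<in>bV G. h x = h y \<longleftrightarrow> (x, y) \<in> (P \<union> P\<inverse>)\<^sup>*)"

definition iso_b :: "'a bgr \<Rightarrow> 'b bgr \<Rightarrow> bool" where
  "iso_b G H \<longleftrightarrow> (\<exists>f. bij_betw f (bV G) (bV H) \<and> bE H = (\<lambda>e. f ` e) ` bE G
     \<and> bin H = map f (bin G) \<and> bout H = map f (bout G))"

definition iso_u :: "'a set \<times> 'a set set \<Rightarrow> 'b set \<times> 'b set set \<Rightarrow> bool" where
  "iso_u X Y \<longleftrightarrow> (\<exists>f. bij_betw f (fst X) (fst Y) \<and> snd Y = (\<lambda>e. f ` e) ` snd X)"

definition underlying :: "'a bgr \<Rightarrow> 'a set \<times> 'a set set" where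
  "underlying G = (bV G, bE G)"

definition bstar :: "'a bgr \<Rightarrow> 'a bgr" where
  "bstar G = G\<lparr>bin := bout G, bout := bin G\<rparr>"

definition btr :: "'a bgr \<Rightarrow> 'b set \<times> 'b set set \<Rightarrow> bool" where
  "btr T X \<longleftrightarrow> (\<exists>h. quot T (set (zip (bin T) (bout T))) h
       \<lparr>bV = fst X, bE = snd X, bin = map h (bin T), bout = map h (bout T)\<rparr>)"

definition dunion_ser :: "'a bgr \<Rightarrow> 'b bgr \<Rightarrow> ('a + 'b) bgr" where
  "dunion_ser F F' = \<lparr>bV = Inl ` bV F \<union> Inr ` bV F',
     bE = (\<lambda>e. Inl ` e) ` bE F \<union> (\<lambda>e. Inr ` e) ` bE F',
     bin = map Inl (bin F), bout = map Inr (bout F')\<rparr>"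

definition series :: "'a bgr \<Rightarrow> 'b bgr \<Rightarrow> 'c bgr \<Rightarrow> bool" where
  "series F F' H \<longleftrightarrow> (\<exists>h. quot (dunion_ser F F')
       (set (zip (map Inl (bout F)) (map Inr (bin F')))) h H)"

definition dunion_par :: "'a bgr \<Rightarrow> 'b bgr \<Rightarrow> ('a + 'b) bgr" where
  "dunion_par F F' = \<lparr>bV = Inl ` bV F \<union> Inr ` bV F',
     bE = (\<lambda>e. Inl ` e) ` bE F \<union> (\<lambda>e. Inr ` e) ` bE F',
     bin = map Inl (bin F), bout = map Inl (bout F)\<rparr>"

definition parallel :: "'a bgr \<Rightarrow> 'b bgr \<Rightarrow> 'c bgr \<Rightarrow> bool" where
  "parallel F F' H \<longleftrightarrow> (\<exists>h. quot (dunion_par F F')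
       (set (zip (map Inl (bin F)) (map Inr (bin F'))) \<union>
        set (zip (map Inl (bout F)) (map Inr (bout F')))) h H)"

text \<open>Positions 0..2k-1 of w = in-labels @ out-labels; the cyclic sequence is
(0,...,k-1,2k-1,...,k); rot k r rotates it by r steps.\<close>

definition cyc_seq :: "nat \<Rightarrow> nat list" where
  "cyc_seq k = [0..<k] @ rev [k..<2*k]"

definition cyc_pos :: "nat \<Rightarrow> nat \<Rightarrow> nat" where
  "cyc_pos k i = (if i < k then i else 3*k - 1 - i)"

definition rot :: "nat \<Rightarrow> nat \<Rightarrow> nat \<Rightarrow> nat" where
  "rot k r i = cyc_seq k ! ((cyc_pos k i + r) mod (2*k))"

definition bperm :: "(nat \<Rightarrow> nat) \<Rightarrow> nat \<Rightarrow> 'a bgr \<Rightarrow> 'a bgr" where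
  "bperm \<sigma> k F = (let w = bin F @ bout F in
     F\<lparr>bin := map (\<lambda>i. w ! \<sigma> i) [0..<k], bout := map (\<lambda>i. w ! \<sigma> i) [k..<2*k]\<rparr>)"

definition del_edge :: "'a bgr \<Rightarrow> 'a bgr \<Rightarrow> bool" where
  "del_edge G H \<longleftrightarrow> (\<exists>e\<in>bE G. H = G\<lparr>bE := bE G - {e}\<rparr>)"

definition del_vertex :: "'a bgr \<Rightarrow> 'a bgr \<Rightarrow> bool" where
  "del_vertex G H \<longleftrightarrow> (\<exists>v\<in>bV G. v \<notin> set (bin G) \<and> v \<notin> set (bout G) \<and>
     H = G\<lparr>bV := bV G - {v}, bE := {e\<in>bE G. v \<notin> e}\<rparr>)"

definition contract :: "'a bgr \<Rightarrow> 'a bgr \<Rightarrow> bool" where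
  "contract G H \<longleftrightarrow> (\<exists>e\<in>bE G. \<exists>h. quot (G\<lparr>bE := bE G - {e}\<rparr>) {(x, y). e = {x, y}} h H)"

inductive bminor :: "nat bgr \<Rightarrow> nat bgr \<Rightarrow> bool" for G where
  minor_iso: "iso_b G H \<Longrightarrow> bminor G H"
| minor_step: "bminor G H \<Longrightarrow> del_edge H H' \<or> del_vertex H H' \<or> contract H H' \<Longrightarrow> bminor G H'"

definition Ck :: "nat \<Rightarrow> nat bgr" where
  "Ck k = \<lparr>bV = {0..<2*k},
     bE = {{i, i+1} | i. i < k - 1 \<or> (k \<le> i \<and> i < 2*k - 1)}
          \<union> (if k \<ge> 1 then {{0, k}, {k - 1, 2*k - 1}} else {}),
     bin = [0..<k], bout = [k..<2*k]\<rparr>"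

definition Mk :: "nat \<Rightarrow> nat bgr" where
  "Mk k = \<lparr>bV = {0..<2*k}, bE = {{i, i+k} | i. i < k},
     bin = [0..<k], bout = [k..<2*k]\<rparr>"

definition QP :: "nat \<Rightarrow> nat bgr set" where
  "QP k = {G. bminor (Ck k) G}"

definition QS :: "nat \<Rightarrow> nat bgr set" where
  "QS k = {G. bminor (Mk k) G}"

inductive_set PP :: "nat \<Rightarrow> nat bgr set" for k where
  PP_base: "Q \<in> QP k \<union> QS k \<Longrightarrow> Q \<in> PP k"
| PP_series: "F \<in> PP k \<Longrightarrow> F' \<in> PP k \<Longrightarrow> series F F' H \<Longrightarrow> H \<in> PP k"
| PP_parallel: "F \<in> PP k \<Longrightarrow> Q \<in> QP k \<Longrightarrow> parallel F Q H \<Longrightarrow> H \<in> PP k"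
| PP_perm: "F \<in> PP k \<Longrightarrow> bperm (rot k r) k F \<in> PP k"

end

theory Submission
  imports Defs
begin

definition img :: "('a \<Rightarrow> 'b) \<Rightarrow> 'a bgr \<Rightarrow> 'b bgr" where
  "img h G = \<lparr>bV = h ` bV G, bE = (\<lambda>e. h ` e) ` bE G, bin = map h (bin G), bout = map h (bout G)\<rparr>"

definition eqc :: "('a \<times> 'a) set \<Rightarrow> ('a \<times> 'a) set" where
  "eqc P = (P \<union> P\<inverse>)\<^sup>*"

definition okk :: "nat \<Rightarrow> 'a bgr \<Rightarrow> bool" where
  "okk k G \<longleftrightarrow> finite (bV G) \<and> (\<forall>e\<in>bE G. e \<subseteq> bV G) \<and> set (bin G) \<subseteq> bV G \<and> set (bout G) \<subseteq> bV G
     \<and> length (bin G) = k \<and> length (bout G) = k"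

lemma img_sel[simp]: "bV (img h G) = h ` bV G" "bE (img h G) = (\<lambda>e. h ` e) ` bE G"
  "bin (img h G) = map h (bin G)" "bout (img h G) = map h (bout G)"
  by (simp_all add: img_def)

lemma bgr_eqI: "bV G = bV H \<Longrightarrow> bE G = bE H \<Longrightarrow> bin G = bin H \<Longrightarrow> bout G = bout H \<Longrightarrow> (G::'a bgr) = H"
  by (cases G; cases H) simp

lemma img_img: "img g (img h G) = img (g \<circ> h) G"
  by (rule bgr_eqI) (simp_all add: image_comp)

lemma img_cong: "okk k G \<Longrightarrow> (\<And>x. x \<in> bV G \<Longrightarrow> h x = h' x) \<Longrightarrow> img h G = img h' G"
proof -
  assume ok: "okk k G" and eq: "\<And>x. x \<in> bV G \<Longrightarrow> h x = h' x"
  have E: "\<And>e. e \<in> bE G \<Longrightarrow> e \<subseteq> bV G" and I: "set (bin G) \<subseteq> bV G" and O: "set (bout G) \<subseteq> bV G"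
    using ok unfolding okk_def by auto
  have 1: "h ` bV G = h' ` bV G" using eq by (rule image_cong[OF refl])
  have 2: "(\<lambda>e. h ` e) ` bE G = (\<lambda>e. h' ` e) ` bE G"
  proof (rule image_cong[OF refl])
    fix e assume "e \<in> bE G"
    then have "e \<subseteq> bV G" by (rule E)
    then show "h ` e = h' ` e" using eq by (intro image_cong[OF refl]) blast
  qed
  have 3: "map h (bin G) = map h' (bin G)" using I eq by (intro map_cong[OF refl]) blast
  have 4: "map h (bout G) = map h' (bout G)" using O eq by (intro map_cong[OF refl]) blast
  show ?thesis by (rule bgr_eqI) (simp_all only: img_sel 1 2 3 4)
qed

lemma okk_img: "okk k G \<Longrightarrow> okk k (img h G)"
  unfolding okk_def by (simp add: image_mono image_subsetI set_map)

lemma eqc_refl[simp]: "(x, x) \<in> eqc P" by (simp add: eqc_def)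
lemma eqc_sym: "(x, y) \<in> eqc P \<Longrightarrow> (y, x) \<in> eqc P"
proof -
  have e: "(P \<union> P\<inverse>)\<inverse> = P \<union> P\<inverse>" by auto
  assume "(x, y) \<in> eqc P"
  then have "(y, x) \<in> ((P \<union> P\<inverse>)\<inverse>)\<^sup>*" unfolding eqc_def by (rule rtrancl_converseI)
  then show ?thesis unfolding eqc_def e .
qed
lemma eqc_trans: "(x, y) \<in> eqc P \<Longrightarrow> (y, z) \<in> eqc P \<Longrightarrow> (x, z) \<in> eqc P"
  unfolding eqc_def by (rule rtrancl_trans)
lemma eqc_base: "(x, y) \<in> P \<Longrightarrow> (x, y) \<in> eqc P"
  unfolding eqc_def by auto
lemma eqc_base': "(y, x) \<in> P \<Longrightarrow> (x, y) \<in> eqc P"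
  unfolding eqc_def by auto
lemma eqc_mono: "P \<subseteq> Q \<Longrightarrow> (x, y) \<in> eqc P \<Longrightarrow> (x, y) \<in> eqc Q"
proof -
  assume "P \<subseteq> Q" "(x, y) \<in> eqc P"
  moreover have "P \<union> P\<inverse> \<subseteq> Q \<union> Q\<inverse>" using \<open>P \<subseteq> Q\<close> by auto
  ultimately show ?thesis unfolding eqc_def using rtrancl_mono by blast
qed

lemma eqc_Un1: "(x, y) \<in> eqc P \<Longrightarrow> (x, y) \<in> eqc (P \<union> Q)"
  by (rule eqc_mono[rotated]) auto

lemma eqc_respects:
  assumes "(x, y) \<in> eqc P" and "\<And>a b. (a, b) \<in> P \<Longrightarrow> \<phi> a = \<phi> b"
  shows "\<phi> x = \<phi> y"
  using assms(1) unfolding eqc_def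
proof (induction rule: rtrancl_induct)
  case (step y z)
  from step.hyps(2) have "\<phi> y = \<phi> z" using assms(2) by (metis Un_iff converseD)
  then show ?case using step.IH by simp
qed simp

lemma eqc_map:
  assumes "(x, y) \<in> eqc P" and "\<And>a b. (a, b) \<in> P \<Longrightarrow> (f a, f b) \<in> eqc Q"
  shows "(f x, f y) \<in> eqc Q"
  using assms(1) unfolding eqc_def[of P]
proof (induction rule: rtrancl_induct)
  case (step y z)
  have "(f y, f z) \<in> eqc Q"
  proof (cases "(y, z) \<in> P")
    case True then show ?thesis by (rule assms(2))
  next
    case False then have "(z, y) \<in> P" using step.hyps(2) by auto
    then show ?thesis by (rule eqc_sym[OF assms(2)])
  qed
  then show ?case by (rule eqc_trans[OF step.IH])
qed simp

lemma eqc_class_eq: "(eqc P `` {x} = eqc P `` {y}) \<longleftrightarrow> (x, y) \<in> eqc P"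
proof
  assume "eqc P `` {x} = eqc P `` {y}"
  moreover have "y \<in> eqc P `` {y}" by simp
  ultimately have "y \<in> eqc P `` {x}" by simp
  then show "(x, y) \<in> eqc P" by simp
next
  assume xy: "(x, y) \<in> eqc P"
  show "eqc P `` {x} = eqc P `` {y}"
  proof (intro subset_antisym subsetI)
    fix z assume "z \<in> eqc P `` {x}"
    then have "(x, z) \<in> eqc P" by simp
    then have "(y, z) \<in> eqc P" by (rule eqc_trans[OF eqc_sym[OF xy]])
    then show "z \<in> eqc P `` {y}" by simp
  next
    fix z assume "z \<in> eqc P `` {y}"
    then have "(y, z) \<in> eqc P" by simp
    then have "(x, z) \<in> eqc P" by (rule eqc_trans[OF xy])
    then show "z \<in> eqc P `` {x}" by simp
  qed
qed

lemma eqc_empty: "(x, y) \<in> eqc {} \<longleftrightarrow> x = y"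
  by (simp add: eqc_def)

lemma quot_iff: "quot G P h H \<longleftrightarrow> P \<subseteq> bV G \<times> bV G \<and> H = img h G \<and>
   (\<forall>x\<in>bV G. \<forall>y\<in>bV G. h x = h y \<longleftrightarrow> (x, y) \<in> eqc P)"
proof -
  have "H = img h G \<longleftrightarrow> bV H = h ` bV G \<and> bE H = (\<lambda>e. h ` e) ` bE G \<and> bin H = map h (bin G) \<and> bout H = map h (bout G)"
    by (auto intro: bgr_eqI simp: img_def)
  then show ?thesis unfolding quot_def eqc_def by (simp only: conj_assoc)
qed

lemma kernel_exists:
  assumes "finite V"
  shows "\<exists>h :: 'a \<Rightarrow> nat. \<forall>x\<in>V. \<forall>y\<in>V. h x = h y \<longleftrightarrow> (x, y) \<in> eqc P"
proof -
  let ?C = "(\<lambda>x. eqc P `` {x}) ` V"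
  have fin: "finite ?C" using assms by (rule finite_imageI)
  obtain f where f: "bij_betw f ?C {0..<card ?C}" by (rule exE[OF ex_bij_betw_finite_nat[OF fin]])
  from f have inj: "inj_on f ?C" by (rule bij_betw_imp_inj_on)
  show ?thesis
  proof (rule exI[where x="\<lambda>x. f (eqc P `` {x})"], intro ballI)
    fix x y assume x: "x \<in> V" and y: "y \<in> V"
    have "f (eqc P `` {x}) = f (eqc P `` {y}) \<longleftrightarrow> eqc P `` {x} = eqc P `` {y}"
      using x y by (intro inj_on_eq_iff[OF inj]) simp_all
    then show "f (eqc P `` {x}) = f (eqc P `` {y}) \<longleftrightarrow> (x, y) \<in> eqc P"
      using eqc_class_eq[of P x y] by simp
  qed
qed

lemma quot_exists:
  assumes "finite (bV G)" "P \<subseteq> bV G \<times> bV G"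
  shows "\<exists>h :: 'a \<Rightarrow> nat. quot G P h (img h G)"
proof -
  obtain h :: "'a \<Rightarrow> nat" where "\<forall>x\<in>bV G. \<forall>y\<in>bV G. h x = h y \<longleftrightarrow> (x, y) \<in> eqc P"
    using kernel_exists[OF assms(1)] by blast
  then have "quot G P h (img h G)" using assms(2) unfolding quot_iff by blast
  then show ?thesis by blast
qed

lemma quot_eq: "quot G P h H \<Longrightarrow> (x, y) \<in> eqc P \<Longrightarrow> x \<in> bV G \<Longrightarrow> y \<in> bV G \<Longrightarrow> h x = h y"
  unfolding quot_iff by blast

lemma quot_pair: "quot G P h H \<Longrightarrow> (x, y) \<in> P \<Longrightarrow> h x = h y"
proof -
  assume q: "quot G P h H" and p: "(x, y) \<in> P"
  then have "x \<in> bV G" "y \<in> bV G" unfolding quot_iff by auto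
  then show ?thesis using quot_eq[OF q eqc_base[OF p]] by blast
qed

lemma comp_kernel:
  assumes PV: "P \<subseteq> V \<times> V" and QV: "Q \<subseteq> V \<times> V"
    and g: "\<forall>x\<in>V. \<forall>y\<in>V. g x = g y \<longleftrightarrow> (x, y) \<in> eqc P"
    and f: "\<forall>u\<in>g ` V. \<forall>v\<in>g ` V. f u = f v \<longleftrightarrow> (u, v) \<in> eqc ((\<lambda>(a, b). (g a, g b)) ` Q)"
  shows "\<forall>x\<in>V. \<forall>y\<in>V. f (g x) = f (g y) \<longleftrightarrow> (x, y) \<in> eqc (P \<union> Q)"
proof (intro ballI iffI)
  fix x y assume x: "x \<in> V" and y: "y \<in> V"
  {
    assume "(x, y) \<in> eqc (P \<union> Q)"
    then show "f (g x) = f (g y)"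
    proof (rule eqc_respects[where \<phi> = "\<lambda>x. f (g x)"])
      fix a b assume ab: "(a, b) \<in> P \<union> Q"
      then have a: "a \<in> V" and b: "b \<in> V" using PV QV by auto
      show "f (g a) = f (g b)"
      proof (cases "(a, b) \<in> P")
        case True then show ?thesis using g a b eqc_base by metis
      next
        case False
        then have "(a, b) \<in> Q" using ab by auto
        then have "(g a, g b) \<in> eqc ((\<lambda>(a, b). (g a, g b)) ` Q)"
          by (intro eqc_base) force
        then show ?thesis using f a b by blast
      qed
    qed
  }
  {
    assume fg: "f (g x) = f (g y)"
    let ?S = "(\<lambda>(a, b). (g a, g b)) ` Q"
    have "(g x, g y) \<in> eqc ?S" using f fg x y by blast
    then have "(g x, g y) \<in> (?S \<union> ?S\<inverse>)\<^sup>*" by (simp add: eqc_def)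
    moreover have "\<And>v. (g x, v) \<in> (?S \<union> ?S\<inverse>)\<^sup>* \<Longrightarrow> \<forall>z\<in>V. v = g z \<longrightarrow> (x, z) \<in> eqc (P \<union> Q)"
    proof -
      fix v assume "(g x, v) \<in> (?S \<union> ?S\<inverse>)\<^sup>*"
      then show "\<forall>z\<in>V. v = g z \<longrightarrow> (x, z) \<in> eqc (P \<union> Q)"
      proof (induction rule: rtrancl_induct)
        case base
        then show ?case using g x eqc_mono[of P "P \<union> Q"] by auto
      next
        case (step v w)
        show ?case
        proof (intro ballI impI)
          fix z assume z: "z \<in> V" and wz: "w = g z"
          from step.hyps(2) obtain a b where ab: "(a, b) \<in> Q" and
            vw: "(v = g a \<and> w = g b) \<or> (v = g b \<and> w = g a)" by auto
          have a: "a \<in> V" and b: "b \<in> V" using ab QV by auto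
          have abe: "(a, b) \<in> eqc (P \<union> Q)" "(b, a) \<in> eqc (P \<union> Q)"
            using ab by (auto intro: eqc_base eqc_base')
          show "(x, z) \<in> eqc (P \<union> Q)"
          proof (cases "v = g a \<and> w = g b")
            case True
            then have xa: "(x, a) \<in> eqc (P \<union> Q)" using step.IH a by auto
            have "g b = g z" using True wz by simp
            then have "(b, z) \<in> eqc P" using g b z by blast
            then have bz: "(b, z) \<in> eqc (P \<union> Q)" by (rule eqc_Un1)
            show ?thesis by (rule eqc_trans[OF eqc_trans[OF xa abe(1)] bz])
          next
            case False
            then have T: "v = g b \<and> w = g a" using vw by auto
            then have xb: "(x, b) \<in> eqc (P \<union> Q)" using step.IH b by auto
            have "g a = g z" using T wz by simp
            then have "(a, z) \<in> eqc P" using g a z by blast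
            then have az: "(a, z) \<in> eqc (P \<union> Q)" by (rule eqc_Un1)
            show ?thesis by (rule eqc_trans[OF eqc_trans[OF xb abe(2)] az])
          qed
        qed
      qed
    qed
    ultimately show "(x, y) \<in> eqc (P \<union> Q)" using y by simp
  }
qed

lemma kernel_iso:
  assumes ok: "okk k G" and ker: "\<forall>x\<in>bV G. \<forall>y\<in>bV G. h x = h y \<longleftrightarrow> h' x = h' y"
  shows "iso_b (img h G) (img h' G)" "iso_u (h ` bV G, (\<lambda>e. h ` e) ` bE G) (h' ` bV G, (\<lambda>e. h' ` e) ` bE G)"
proof -
  define f where "f u = h' (inv_into (bV G) h u)" for u
  have fh: "f (h x) = h' x" if "x \<in> bV G" for x
  proof -
    have "inv_into (bV G) h (h x) \<in> bV G" "h (inv_into (bV G) h (h x)) = h x"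
      using that by (auto intro: inv_into_into f_inv_into_f)
    then show ?thesis unfolding f_def using ker that by metis
  qed
  have img: "img f (img h G) = img h' G"
    unfolding img_img by (rule img_cong[OF ok]) (simp add: fh)
  have inj: "inj_on f (h ` bV G)"
  proof (rule inj_onI)
    fix u v assume "u \<in> h ` bV G" "v \<in> h ` bV G" "f u = f v"
    then obtain x y where "x \<in> bV G" "y \<in> bV G" "u = h x" "v = h y" "h' x = h' y" using fh by auto
    then show "u = v" using ker by auto
  qed
  have bij: "bij_betw f (h ` bV G) (h' ` bV G)"
    using inj img by (metis bij_betw_imageI img_sel(1))
  show "iso_b (img h G) (img h' G)"
    unfolding iso_b_def using bij img[symmetric] by (auto simp: img_def)
  have "(\<lambda>e. h' ` e) ` bE G = (\<lambda>e. f ` e) ` (\<lambda>e. h ` e) ` bE G"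
    using img by (metis img_sel(2))
  then show "iso_u (h ` bV G, (\<lambda>e. h ` e) ` bE G) (h' ` bV G, (\<lambda>e. h' ` e) ` bE G)"
    unfolding iso_u_def using bij by auto
qed

lemma iso_b_img: "iso_b G H \<longleftrightarrow> (\<exists>f. inj_on f (bV G) \<and> H = img f G)"
proof
  assume "iso_b G H"
  then obtain f where f: "bij_betw f (bV G) (bV H)" "bE H = (\<lambda>e. f ` e) ` bE G"
    "bin H = map f (bin G)" "bout H = map f (bout G)" unfolding iso_b_def by blast
  then have "inj_on f (bV G)" "bV H = f ` bV G" by (simp_all add: bij_betw_def)
  moreover have "H = img f G" by (rule bgr_eqI) (simp_all add: f \<open>bV H = f ` bV G\<close>)
  ultimately show "\<exists>f. inj_on f (bV G) \<and> H = img f G" by blast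
next
  assume "\<exists>f. inj_on f (bV G) \<and> H = img f G"
  then obtain f where f: "inj_on f (bV G)" "H = img f G" by blast
  then have "bij_betw f (bV G) (bV H)" by (simp add: bij_betw_def)
  moreover have "bE H = (\<lambda>e. f ` e) ` bE G" "bin H = map f (bin G)" "bout H = map f (bout G)"
    using f by simp_all
  ultimately show "iso_b G H" unfolding iso_b_def by blast
qed

lemma iso_b_trans: "iso_b G H \<Longrightarrow> iso_b H K \<Longrightarrow> iso_b G K"
proof -
  assume "iso_b G H" "iso_b H K"
  then obtain f g where f: "inj_on f (bV G)" "H = img f G" and g: "inj_on g (bV H)" "K = img g H"
    unfolding iso_b_img by blast
  have "inj_on (g \<circ> f) (bV G)" using f g by (simp add: comp_inj_on)
  moreover have "K = img (g \<circ> f) G" using f g by (simp add: img_img)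
  ultimately show ?thesis unfolding iso_b_img by blast
qed

lemma iso_b_refl: "iso_b G G"
proof -
  have "G = img id G" by (rule bgr_eqI) simp_all
  then show ?thesis unfolding iso_b_img by (metis inj_on_id)
qed

lemma okk_upd_E: "okk k G \<Longrightarrow> E \<subseteq> bE G \<Longrightarrow> okk k (G\<lparr>bE := E\<rparr>)"
  unfolding okk_def by auto

lemma okk_minor_step:
  assumes "okk k H" "del_edge H H' \<or> del_vertex H H' \<or> contract H H'"
  shows "okk k H'"
  using assms(2)
proof (elim disjE)
  assume "del_edge H H'"
  then obtain e where "H' = H\<lparr>bE := bE H - {e}\<rparr>" unfolding del_edge_def by blast
  then show ?thesis using okk_upd_E[OF assms(1)] by auto
next
  assume "del_vertex H H'"
  then obtain v where v: "v \<notin> set (bin H)" "v \<notin> set (bout H)"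
    "H' = H\<lparr>bV := bV H - {v}, bE := {e\<in>bE H. v \<notin> e}\<rparr>" unfolding del_vertex_def by blast
  then show ?thesis using assms(1) unfolding okk_def by auto
next
  assume "contract H H'"
  then obtain e h P where "quot (H\<lparr>bE := bE H - {e}\<rparr>) P h H'" unfolding contract_def by blast
  then have "H' = img h (H\<lparr>bE := bE H - {e}\<rparr>)" unfolding quot_iff by blast
  moreover have "okk k (H\<lparr>bE := bE H - {e}\<rparr>)" using okk_upd_E[OF assms(1)] by auto
  ultimately show ?thesis using okk_img by metis
qed

lemma bminor_okk: "bminor G H \<Longrightarrow> okk k G \<Longrightarrow> okk k H"
proof (induction rule: bminor.induct)
  case (minor_iso H)
  then show ?case unfolding iso_b_img using okk_img by metis
next
  case (minor_step H H')
  then show ?case using okk_minor_step by blast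
qed

lemma okk_Ck: "okk k (Ck k)"
proof -
  have "\<forall>e\<in>bE (Ck k). e \<subseteq> {0..<2*k}"
  proof
    fix e assume "e \<in> bE (Ck k)"
    then have "(\<exists>i. e = {i, i+1} \<and> (i < k - 1 \<or> (k \<le> i \<and> i < 2*k - 1))) \<or> (k \<ge> 1 \<and> (e = {0, k} \<or> e = {k - 1, 2*k - 1}))"
      unfolding Ck_def by (auto split: if_splits)
    then show "e \<subseteq> {0..<2*k}" by auto
  qed
  then show ?thesis unfolding okk_def by (simp add: Ck_def)
qed

lemma okk_Mk: "okk k (Mk k)"
  unfolding okk_def Mk_def by auto

lemma okk_dunion_ser: "okk k F \<Longrightarrow> okk k F' \<Longrightarrow> okk k (dunion_ser F F')"
proof -
  assume a: "okk k F" "okk k F'"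
  have "\<forall>e\<in>bE (dunion_ser F F'). e \<subseteq> bV (dunion_ser F F')"
  proof
    fix e assume "e \<in> bE (dunion_ser F F')"
    then have "(\<exists>e'\<in>bE F. e = Inl ` e') \<or> (\<exists>e'\<in>bE F'. e = Inr ` e')" by (auto simp: dunion_ser_def)
    then show "e \<subseteq> bV (dunion_ser F F')"
    proof (elim disjE bexE)
      fix e' assume "e' \<in> bE F" "e = Inl ` e'"
      moreover have "e' \<subseteq> bV F" using a(1) \<open>e' \<in> bE F\<close> unfolding okk_def by blast
      ultimately show ?thesis by (auto simp: dunion_ser_def)
    next
      fix e' assume "e' \<in> bE F'" "e = Inr ` e'"
      moreover have "e' \<subseteq> bV F'" using a(2) \<open>e' \<in> bE F'\<close> unfolding okk_def by blast
      ultimately show ?thesis by (auto simp: dunion_ser_def)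
    qed
  qed
  then show ?thesis using a unfolding okk_def by (auto simp: dunion_ser_def)
qed

lemma okk_dunion_par: "okk k F \<Longrightarrow> okk k F' \<Longrightarrow> okk k (dunion_par F F')"
proof -
  assume a: "okk k F" "okk k F'"
  have "\<forall>e\<in>bE (dunion_par F F'). e \<subseteq> bV (dunion_par F F')"
  proof
    fix e assume "e \<in> bE (dunion_par F F')"
    then have "(\<exists>e'\<in>bE F. e = Inl ` e') \<or> (\<exists>e'\<in>bE F'. e = Inr ` e')" by (auto simp: dunion_par_def)
    then show "e \<subseteq> bV (dunion_par F F')"
    proof (elim disjE bexE)
      fix e' assume "e' \<in> bE F" "e = Inl ` e'"
      moreover have "e' \<subseteq> bV F" using a(1) \<open>e' \<in> bE F\<close> unfolding okk_def by blast
      ultimately show ?thesis by (auto simp: dunion_par_def)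
    next
      fix e' assume "e' \<in> bE F'" "e = Inr ` e'"
      moreover have "e' \<subseteq> bV F'" using a(2) \<open>e' \<in> bE F'\<close> unfolding okk_def by blast
      ultimately show ?thesis by (auto simp: dunion_par_def)
    qed
  qed
  then show ?thesis using a unfolding okk_def by (auto simp: dunion_par_def)
qed

lemma cyc_seq_len: "length (cyc_seq k) = 2 * k"
  by (simp add: cyc_seq_def)

lemma cyc_seq_set: "set (cyc_seq k) = {0..<2*k}"
  by (auto simp: cyc_seq_def)

lemma rot_lt: "0 < k \<Longrightarrow> rot k r i < 2 * k"
proof -
  assume "0 < k"
  then have "(cyc_pos k i + r) mod (2*k) < length (cyc_seq k)" by (simp add: cyc_seq_len)
  then have "rot k r i \<in> set (cyc_seq k)" unfolding rot_def by (rule nth_mem)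
  then show ?thesis by (simp add: cyc_seq_set)
qed

lemma okk_bperm: "okk k F \<Longrightarrow> okk k (bperm (rot k r) k F)"
proof -
  assume ok: "okk k F"
  let ?w = "bin F @ bout F"
  have lw: "length ?w = 2 * k" using ok unfolding okk_def by simp
  have sw: "set ?w \<subseteq> bV F" using ok unfolding okk_def by simp
  have mem: "?w ! rot k r i \<in> bV F" if "k > 0" for i
    using rot_lt[OF that, of r i] lw sw nth_mem by (metis subsetD)
  show ?thesis
  proof (cases "k = 0")
    case True then show ?thesis using ok unfolding okk_def bperm_def by simp
  next
    case False
    then show ?thesis using ok mem unfolding okk_def bperm_def Let_def by auto
  qed
qed

lemma PP_okk: "F \<in> PP k \<Longrightarrow> okk k F"
proof (induction rule: PP.induct)
  case (PP_base Q)
  then show ?case using bminor_okk okk_Ck okk_Mk unfolding QP_def QS_def by blast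
next
  case (PP_series F F' H)
  then obtain h P where "quot (dunion_ser F F') P h H" unfolding series_def by blast
  then have "H = img h (dunion_ser F F')" unfolding quot_iff by blast
  then show ?case using okk_img okk_dunion_ser PP_series.IH by metis
next
  case (PP_parallel F Q H)
  have "okk k Q" using PP_parallel.hyps(2) bminor_okk okk_Ck unfolding QP_def by blast
  obtain h P where "quot (dunion_par F Q) P h H" using PP_parallel.hyps(3) unfolding parallel_def by blast
  then have "H = img h (dunion_par F Q)" unfolding quot_iff by blast
  then show ?case using okk_img okk_dunion_par PP_parallel.IH \<open>okk k Q\<close> by metis
next
  case (PP_perm F r)
  then show ?case using okk_bperm by blast
qed

lemma bstar_sel[simp]: "bV (bstar G) = bV G" "bE (bstar G) = bE G" "bin (bstar G) = bout G" "bout (bstar G) = bin G"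
  by (simp_all add: bstar_def)

lemma bstar_img: "bstar (img h G) = img h (bstar G)"
  by (rule bgr_eqI) simp_all

lemma quot_star: "quot G P h H \<Longrightarrow> quot (bstar G) P h (bstar H)"
  unfolding quot_iff by (simp add: bstar_img)

lemma iso_b_star: "iso_b G H \<Longrightarrow> iso_b (bstar G) (bstar H)"
  unfolding iso_b_img by (metis bstar_img bstar_sel(1))

lemma bstar_updE: "bstar (H\<lparr>bE := X\<rparr>) = (bstar H)\<lparr>bE := X\<rparr>"
  by (simp add: bstar_def)

lemma minor_step_star:
  assumes "del_edge H H' \<or> del_vertex H H' \<or> contract H H'"
  shows "del_edge (bstar H) (bstar H') \<or> del_vertex (bstar H) (bstar H') \<or> contract (bstar H) (bstar H')"
  using assms
proof (elim disjE)
  assume "del_edge H H'"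
  then obtain e where "e \<in> bE H" "H' = H\<lparr>bE := bE H - {e}\<rparr>" unfolding del_edge_def by blast
  moreover have "bstar H' = (bstar H)\<lparr>bE := bE (bstar H) - {e}\<rparr>"
    using \<open>H' = _\<close> by (intro bgr_eqI) simp_all
  ultimately have "del_edge (bstar H) (bstar H')" unfolding del_edge_def by (metis bstar_sel(2))
  then show ?thesis by blast
next
  assume "del_vertex H H'"
  then obtain v where v: "v \<in> bV H" "v \<notin> set (bin H)" "v \<notin> set (bout H)"
    "H' = H\<lparr>bV := bV H - {v}, bE := {e\<in>bE H. v \<notin> e}\<rparr>" unfolding del_vertex_def by blast
  have eq: "bstar H' = (bstar H)\<lparr>bV := bV (bstar H) - {v}, bE := {e\<in>bE (bstar H). v \<notin> e}\<rparr>"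
    using v(4) by (intro bgr_eqI) simp_all
  have vv: "v \<in> bV (bstar H)" "v \<notin> set (bin (bstar H))" "v \<notin> set (bout (bstar H))" using v by simp_all
  have "del_vertex (bstar H) (bstar H')" unfolding del_vertex_def
    by (intro bexI[of _ v] conjI vv(2) vv(3) eq vv(1))
  then show ?thesis by blast
next
  assume "contract H H'"
  then obtain e h where e: "e \<in> bE H" and q: "quot (H\<lparr>bE := bE H - {e}\<rparr>) {(x, y). e = {x, y}} h H'"
    unfolding contract_def by blast
  have "quot ((bstar H)\<lparr>bE := bE (bstar H) - {e}\<rparr>) {(x, y). e = {x, y}} h (bstar H')"
    using quot_star[OF q] by (simp only: bstar_updE bstar_sel(2))
  then have "contract (bstar H) (bstar H')" unfolding contract_def using e by auto
  then show ?thesis by blast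
qed

lemma bminor_star: "bminor G H \<Longrightarrow> bminor (bstar G) (bstar H)"
proof (induction rule: bminor.induct)
  case (minor_iso H)
  then show ?case by (simp add: iso_b_star bminor.minor_iso)
next
  case (minor_step H H')
  then show ?case using minor_step_star bminor.minor_step by blast
qed

lemma bminor_iso_start: "bminor G H \<Longrightarrow> iso_b G' G \<Longrightarrow> bminor G' H"
proof (induction rule: bminor.induct)
  case (minor_iso H)
  then show ?case using iso_b_trans bminor.minor_iso by blast
next
  case (minor_step H H')
  then show ?case using bminor.minor_step by blast
qed

lemma invol_edges:
  assumes "\<forall>x\<in>V. f x \<in> V \<and> f (f x) = x" "\<forall>e\<in>E. e \<subseteq> V" "\<forall>e\<in>E. f ` e \<in> E"
  shows "(\<lambda>e. f ` e) ` E = E"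
proof (intro subset_antisym subsetI)
  fix e assume "e \<in> (\<lambda>e. f ` e) ` E" then show "e \<in> E" using assms(3) by auto
next
  fix e assume e: "e \<in> E"
  then have "e \<subseteq> V" using assms(2) by blast
  then have "f ` (f ` e) = e" using assms(1) by (force simp: image_comp)
  moreover have "f ` e \<in> E" using assms(3) e by blast
  ultimately show "e \<in> (\<lambda>e. f ` e) ` E" by (metis image_eqI)
qed

definition swk :: "nat \<Rightarrow> nat \<Rightarrow> nat" where
  "swk k i = (if i < k then i + k else i - k)"

lemma swk_inv: "i < 2 * k \<Longrightarrow> swk k i < 2 * k \<and> swk k (swk k i) = i"
  by (auto simp: swk_def)

lemma map_swk1: "map (swk k) [0..<k] = [k..<2*k]"
  by (rule nth_equalityI) (auto simp: swk_def)

lemma map_swk2: "map (swk k) [k..<2*k] = [0..<k]"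
  by (rule nth_equalityI) (auto simp: swk_def)

lemma Ck_edges_swk: "\<forall>e\<in>bE (Ck k). swk k ` e \<in> bE (Ck k)"
proof
  fix e assume "e \<in> bE (Ck k)"
  then have "(\<exists>i. e = {i, i+1} \<and> i < k - 1) \<or> (\<exists>i. e = {i, i+1} \<and> k \<le> i \<and> i < 2*k - 1) \<or> (k \<ge> 1 \<and> (e = {0, k} \<or> e = {k - 1, 2*k - 1}))"
    unfolding Ck_def by (auto split: if_splits)
  then show "swk k ` e \<in> bE (Ck k)"
  proof (elim disjE exE conjE)
    fix i assume i: "e = {i, i+1}" "i < k - 1"
    then have "swk k ` e = {i + k, (i + k) + 1}" by (auto simp: swk_def)
    moreover have "k \<le> i + k \<and> i + k < 2*k - 1" using i by auto
    ultimately show ?thesis unfolding Ck_def by auto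
  next
    fix i assume i: "e = {i, i+1}" "k \<le> i" "i < 2*k - 1"
    then have "swk k ` e = {i - k, (i - k) + 1}" by (auto simp: swk_def)
    moreover have "i - k < k - 1" using i by auto
    ultimately show ?thesis unfolding Ck_def by auto
  next
    assume "1 \<le> k" "e = {0, k}"
    then have "swk k ` e = {0, k}" by (auto simp: swk_def)
    then show ?thesis using \<open>e = {0, k}\<close> \<open>e \<in> bE (Ck k)\<close> by simp
  next
    assume "1 \<le> k" "e = {k - 1, 2*k - 1}"
    then have "swk k ` e = {k - 1, 2*k - 1}" by (auto simp: swk_def)
    then show ?thesis using \<open>e = {k - 1, 2*k - 1}\<close> \<open>e \<in> bE (Ck k)\<close> by simp
  qed
qed

lemma Mk_edges_swk: "\<forall>e\<in>bE (Mk k). swk k ` e \<in> bE (Mk k)"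
proof
  fix e assume "e \<in> bE (Mk k)"
  then obtain i where i: "e = {i, i + k}" "i < k" unfolding Mk_def by auto
  then have "swk k ` e = {i, i + k}" by (auto simp: swk_def)
  then show "swk k ` e \<in> bE (Mk k)" using i \<open>e \<in> bE (Mk k)\<close> by simp
qed

lemma swk_bij_inj: "inj_on (swk k) {0..<2*k}"
  by (rule inj_onI) (metis atLeastLessThan_iff swk_inv)

lemma swk_image: "swk k ` {0..<2*k} = {0..<2*k}"
proof -
  have "\<forall>x\<in>{0..<2*k}. swk k x \<in> {0..<2*k} \<and> swk k (swk k x) = x" using swk_inv by auto
  then show ?thesis by (metis (no_types, lifting) image_eqI image_subsetI subsetI subset_antisym)
qed

lemma iso_Ck_star: "iso_b (Ck k) (bstar (Ck k))"
proof -
  have V: "bV (Ck k) = {0..<2*k}" by (simp add: Ck_def)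
  have inv: "\<forall>x\<in>bV (Ck k). swk k x \<in> bV (Ck k) \<and> swk k (swk k x) = x" using swk_inv V by auto
  have EV: "\<forall>e\<in>bE (Ck k). e \<subseteq> bV (Ck k)" using okk_Ck unfolding okk_def by blast
  have "bstar (Ck k) = img (swk k) (Ck k)"
  proof (rule bgr_eqI)
    show "bV (bstar (Ck k)) = bV (img (swk k) (Ck k))" using V swk_image by simp
    show "bE (bstar (Ck k)) = bE (img (swk k) (Ck k))" using invol_edges[OF inv EV Ck_edges_swk] by simp
    show "bin (bstar (Ck k)) = bin (img (swk k) (Ck k))" by (simp add: Ck_def map_swk1)
    show "bout (bstar (Ck k)) = bout (img (swk k) (Ck k))" by (simp add: Ck_def map_swk2)
  qed
  then show ?thesis unfolding iso_b_img using swk_bij_inj V by metis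
qed

lemma iso_Mk_star: "iso_b (Mk k) (bstar (Mk k))"
proof -
  have V: "bV (Mk k) = {0..<2*k}" by (simp add: Mk_def)
  have inv: "\<forall>x\<in>bV (Mk k). swk k x \<in> bV (Mk k) \<and> swk k (swk k x) = x" using swk_inv V by auto
  have EV: "\<forall>e\<in>bE (Mk k). e \<subseteq> bV (Mk k)" using okk_Mk unfolding okk_def by blast
  have "bstar (Mk k) = img (swk k) (Mk k)"
  proof (rule bgr_eqI)
    show "bV (bstar (Mk k)) = bV (img (swk k) (Mk k))" using V swk_image by simp
    show "bE (bstar (Mk k)) = bE (img (swk k) (Mk k))" using invol_edges[OF inv EV Mk_edges_swk] by simp
    show "bin (bstar (Mk k)) = bin (img (swk k) (Mk k))" by (simp add: Mk_def map_swk1)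
    show "bout (bstar (Mk k)) = bout (img (swk k) (Mk k))" by (simp add: Mk_def map_swk2)
  qed
  then show ?thesis unfolding iso_b_img using swk_bij_inj V by metis
qed

lemma QP_star: "Q \<in> QP k \<Longrightarrow> bstar Q \<in> QP k"
  unfolding QP_def using bminor_star bminor_iso_start iso_Ck_star by blast

lemma QS_star: "Q \<in> QS k \<Longrightarrow> bstar Q \<in> QS k"
  unfolding QS_def using bminor_star bminor_iso_start iso_Mk_star by blast

definition ssw :: "'a + 'b \<Rightarrow> 'b + 'a" where
  "ssw x = (case x of Inl a \<Rightarrow> Inr a | Inr b \<Rightarrow> Inl b)"

lemma ssw_simps[simp]: "ssw (Inl a) = Inr a" "ssw (Inr a) = Inl a" "ssw (ssw x) = x"
  by (simp_all add: ssw_def split: sum.splits)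

lemma ssw_comp[simp]: "ssw \<circ> ssw = id"
  by (rule ext) simp

lemma quot_invol:
  assumes q: "quot G P h H" and inv: "\<And>x. \<tau> (\<sigma> x) = x" "\<And>x. \<sigma> (\<tau> x) = x"
  shows "quot (img \<sigma> G) ((\<lambda>(a, b). (\<sigma> b, \<sigma> a)) ` P) (h \<circ> \<tau>) H"
proof -
  from q have PV: "P \<subseteq> bV G \<times> bV G" and H: "H = img h G"
    and ker: "\<forall>x\<in>bV G. \<forall>y\<in>bV G. h x = h y \<longleftrightarrow> (x, y) \<in> eqc P" unfolding quot_iff by blast+
  let ?P' = "(\<lambda>(a, b). (\<sigma> b, \<sigma> a)) ` P"
  have "?P' \<subseteq> bV (img \<sigma> G) \<times> bV (img \<sigma> G)" using PV by auto
  moreover have "\<tau> \<circ> \<sigma> = id" using inv by (simp add: fun_eq_iff)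
  then have "img (h \<circ> \<tau>) (img \<sigma> G) = H" using H by (simp add: img_img comp_assoc)
  moreover have "\<forall>u\<in>bV (img \<sigma> G). \<forall>v\<in>bV (img \<sigma> G). (h \<circ> \<tau>) u = (h \<circ> \<tau>) v \<longleftrightarrow> (u, v) \<in> eqc ?P'"
  proof (intro ballI)
    fix u v assume "u \<in> bV (img \<sigma> G)" "v \<in> bV (img \<sigma> G)"
    then obtain x y where x: "x \<in> bV G" "u = \<sigma> x" and y: "y \<in> bV G" "v = \<sigma> y" by auto
    have 1: "(x, y) \<in> eqc P \<Longrightarrow> (\<sigma> x, \<sigma> y) \<in> eqc ?P'"
    proof -
      assume "(x, y) \<in> eqc P"
      then show ?thesis
      proof (rule eqc_map)
        fix a b assume "(a, b) \<in> P"
        then have "(\<sigma> b, \<sigma> a) \<in> ?P'" by force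
        then show "(\<sigma> a, \<sigma> b) \<in> eqc ?P'" by (rule eqc_base')
      qed
    qed
    have 2: "(\<sigma> x, \<sigma> y) \<in> eqc ?P' \<Longrightarrow> (x, y) \<in> eqc P"
    proof -
      assume "(\<sigma> x, \<sigma> y) \<in> eqc ?P'"
      then have "(\<tau> (\<sigma> x), \<tau> (\<sigma> y)) \<in> eqc P"
      proof (rule eqc_map)
        fix a b assume "(a, b) \<in> ?P'"
        then obtain c d where "(c, d) \<in> P" "a = \<sigma> d" "b = \<sigma> c" by auto
        then show "(\<tau> a, \<tau> b) \<in> eqc P" using inv by (simp add: eqc_base')
      qed
      then show ?thesis using inv by simp
    qed
    show "(h \<circ> \<tau>) u = (h \<circ> \<tau>) v \<longleftrightarrow> (u, v) \<in> eqc ?P'"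
      using ker x y 1 2 inv by auto
  qed
  ultimately show ?thesis unfolding quot_iff by blast
qed

lemma set_zip_map: "set (zip (map f xs) (map g ys)) = (\<lambda>(a, b). (f a, g b)) ` set (zip xs ys)"
  by (simp add: zip_map_map)

lemma series_star:
  assumes "series F F' H"
  shows "series (bstar F') (bstar F) (bstar H)"
proof -
  let ?D = "dunion_ser F F'"
  let ?P = "set (zip (map Inl (bout F)) (map Inr (bin F')))"
  obtain h where q: "quot ?D ?P h H" using assms unfolding series_def by blast
  have q2: "quot (img ssw (bstar ?D)) ((\<lambda>(a, b). (ssw b, ssw a)) ` ?P) (h \<circ> ssw) (bstar H)"
    by (rule quot_invol[OF quot_star[OF q]]) simp_all
  have D: "img ssw (bstar ?D) = dunion_ser (bstar F') (bstar F)"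
    by (rule bgr_eqI) (auto simp: dunion_ser_def image_image image_Un)
  have P: "(\<lambda>(a, b). (ssw b, ssw a)) ` ?P = set (zip (map Inl (bout (bstar F'))) (map Inr (bin (bstar F))))"
  proof -
    have "(\<lambda>(a, b). (ssw b, ssw a)) ` ?P = (\<lambda>(a, b). (Inl b, Inr a)) ` set (zip (bout F) (bin F'))"
      by (simp add: set_zip_map image_image case_prod_beta)
    also have "\<dots> = (\<lambda>(a, b). (Inl a, Inr b)) ` set (zip (bin F') (bout F))"
      by (subst zip_commute) (simp add: image_image case_prod_beta)
    also have "\<dots> = set (zip (map Inl (bout (bstar F'))) (map Inr (bin (bstar F))))"
      by (simp add: set_zip_map)
    finally show ?thesis .
  qed
  show ?thesis unfolding series_def using q2 D P by metis
qed

lemma parallel_star: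
  assumes "parallel F Q H"
  shows "parallel (bstar F) (bstar Q) (bstar H)"
proof -
  let ?D = "dunion_par F Q"
  let ?P = "set (zip (map Inl (bin F)) (map Inr (bin Q))) \<union> set (zip (map Inl (bout F)) (map Inr (bout Q)))"
  obtain h where q: "quot ?D ?P h H" using assms unfolding parallel_def by blast
  have D: "bstar ?D = dunion_par (bstar F) (bstar Q)"
    by (rule bgr_eqI) (simp_all add: dunion_par_def)
  have P: "?P = set (zip (map Inl (bin (bstar F))) (map Inr (bin (bstar Q)))) \<union> set (zip (map Inl (bout (bstar F))) (map Inr (bout (bstar Q))))"
    by auto
  show ?thesis unfolding parallel_def using quot_star[OF q] D P by metis
qed

lemma cs_nth: "c < 2*k \<Longrightarrow> cyc_seq k ! c = (if c < k then c else 3*k - 1 - c)"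
proof (cases "c < k")
  case True then show ?thesis by (simp add: cyc_seq_def nth_append)
next
  case False
  assume c: "c < 2*k"
  have "rev [k..<2*k] ! (c - k) = [k..<2*k] ! (k - Suc (c - k))"
    using False c by (subst rev_nth) auto
  also have "\<dots> = 3*k - 1 - c" using False c by simp
  finally show ?thesis using False by (simp add: cyc_seq_def nth_append)
qed

lemma mod_sum_lemma:
  fixes n a b r r' :: nat
  assumes n: "n > 0" and ab: "a + b = n - 1" and rr: "(r + r') mod n = 0"
  shows "(a + r) mod n + (b + r') mod n = n - 1"
proof -
  let ?x = "(a + r) mod n + (b + r') mod n"
  have "?x mod n = (a + r + (b + r')) mod n" by (simp add: mod_add_eq)
  also have "a + r + (b + r') = (n - 1) + (r + r')" using ab by simp
  also have "((n - 1) + (r + r')) mod n = ((n - 1) + (r + r') mod n) mod n" by (rule mod_add_right_eq[symmetric])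
  also have "\<dots> = (n - 1) mod n" using rr by simp
  also have "\<dots> = n - 1" using n by simp
  finally have xm: "?x mod n = n - 1" .
  have "(a + r) mod n < n" "(b + r') mod n < n" using n by simp_all
  then have xl: "?x < 2 * n - 1" by linarith
  show ?thesis
  proof (cases "?x < n")
    case True then show ?thesis using xm by simp
  next
    case False
    then have "?x mod n = ?x - n" using xl by (simp add: le_mod_geq)
    then show ?thesis using xm xl False by linarith
  qed
qed

lemma rsum: "(n::nat) > 0 \<Longrightarrow> (r + (n - r mod n)) mod n = 0"
proof -
  assume n: "n > 0"
  have lt: "r mod n < n" using n by simp
  have e: "r = n * (r div n) + r mod n" by simp
  have "r + (n - r mod n) = n * (r div n) + n" using lt e by linarith
  also have "\<dots> = n * (r div n + 1)" by simp
  finally show ?thesis by simp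
qed

lemma swk_cs: "c < 2*k \<Longrightarrow> swk k (cyc_seq k ! c) = cyc_seq k ! (2*k - 1 - c)"
  by (simp add: cs_nth swk_def) arith

lemma cyc_pos_lo: "i < k \<Longrightarrow> cyc_pos k i = i" by (simp add: cyc_pos_def)
lemma cyc_pos_hi: "i < k \<Longrightarrow> cyc_pos k (k + i) = 2*k - 1 - i" by (simp add: cyc_pos_def)

lemma rot_star_a:
  assumes k: "0 < k" and i: "i < k"
  shows "rot k r (k + i) = swk k (rot k (2*k - r mod (2*k)) i)"
proof -
  let ?n = "2*k" let ?r' = "2*k - r mod (2*k)"
  have n: "?n > 0" using k by simp
  let ?c1 = "(2*k - 1 - i + r) mod ?n" and ?c2 = "(i + ?r') mod ?n"
  have s: "?c1 + ?c2 = ?n - 1"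
    by (rule mod_sum_lemma[OF n _ rsum[OF n]]) (use i in simp)
  have c2: "?c2 < ?n" using n by simp
  have "rot k ?r' i = cyc_seq k ! ?c2" unfolding rot_def using i by (simp add: cyc_pos_lo)
  then have "swk k (rot k ?r' i) = cyc_seq k ! (?n - 1 - ?c2)" using swk_cs[OF c2] by simp
  also have "?n - 1 - ?c2 = ?c1" using s by simp
  also have "cyc_seq k ! ?c1 = rot k r (k + i)" unfolding rot_def using i by (simp add: cyc_pos_hi)
  finally show ?thesis by simp
qed

lemma rot_star_b:
  assumes k: "0 < k" and i: "i < k"
  shows "rot k r i = swk k (rot k (2*k - r mod (2*k)) (k + i))"
proof -
  let ?n = "2*k" let ?r' = "2*k - r mod (2*k)"
  have n: "?n > 0" using k by simp
  let ?c1 = "(i + r) mod ?n" and ?c2 = "(2*k - 1 - i + ?r') mod ?n"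
  have s: "?c1 + ?c2 = ?n - 1"
    by (rule mod_sum_lemma[OF n _ rsum[OF n]]) (use i in simp)
  have c2: "?c2 < ?n" using n by simp
  have "rot k ?r' (k + i) = cyc_seq k ! ?c2" unfolding rot_def using i by (simp add: cyc_pos_hi)
  then have "swk k (rot k ?r' (k + i)) = cyc_seq k ! (?n - 1 - ?c2)" using swk_cs[OF c2] by simp
  also have "?n - 1 - ?c2 = ?c1" using s by simp
  also have "cyc_seq k ! ?c1 = rot k r i" unfolding rot_def using i by (simp add: cyc_pos_lo)
  finally show ?thesis by simp
qed

lemma w_swk:
  assumes "length xs = k" "length ys = k" "p < 2*k"
  shows "(ys @ xs) ! p = (xs @ ys) ! swk k p"
  using assms by (auto simp: swk_def nth_append)

lemma bperm_star:
  assumes ok: "okk k F"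
  shows "bstar (bperm (rot k r) k F) = bperm (rot k (2*k - r mod (2*k))) k (bstar F)"
proof (cases "k = 0")
  case True
  then show ?thesis by (intro bgr_eqI) (simp_all add: bperm_def)
next
  case False
  then have k: "0 < k" by simp
  let ?r' = "2*k - r mod (2*k)"
  have l: "length (bin F) = k" "length (bout F) = k" using ok unfolding okk_def by simp_all
  have i1: "map (\<lambda>i. (bin F @ bout F) ! rot k r i) [k..<2*k] = map (\<lambda>i. (bout F @ bin F) ! rot k ?r' i) [0..<k]"
  proof (rule nth_equalityI)
    fix i assume "i < length (map (\<lambda>i. (bin F @ bout F) ! rot k r i) [k..<2*k])"
    then have i: "i < k" by simp
    have "(bout F @ bin F) ! rot k ?r' i = (bin F @ bout F) ! swk k (rot k ?r' i)"
      using w_swk[OF l(1) l(2) rot_lt[OF k]] by simp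
    also have "\<dots> = (bin F @ bout F) ! rot k r (k + i)" using rot_star_a[OF k i] by simp
    finally show "map (\<lambda>i. (bin F @ bout F) ! rot k r i) [k..<2*k] ! i = map (\<lambda>i. (bout F @ bin F) ! rot k ?r' i) [0..<k] ! i"
      using i by simp
  qed simp
  have i2: "map (\<lambda>i. (bin F @ bout F) ! rot k r i) [0..<k] = map (\<lambda>i. (bout F @ bin F) ! rot k ?r' i) [k..<2*k]"
  proof (rule nth_equalityI)
    fix i assume "i < length (map (\<lambda>i. (bin F @ bout F) ! rot k r i) [0..<k])"
    then have i: "i < k" by simp
    have "(bout F @ bin F) ! rot k ?r' (k + i) = (bin F @ bout F) ! swk k (rot k ?r' (k + i))"
      using w_swk[OF l(1) l(2) rot_lt[OF k]] by simp
    also have "\<dots> = (bin F @ bout F) ! rot k r i" using rot_star_b[OF k i] by simp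
    finally show "map (\<lambda>i. (bin F @ bout F) ! rot k r i) [0..<k] ! i = map (\<lambda>i. (bout F @ bin F) ! rot k ?r' i) [k..<2*k] ! i"
      using i by simp
  qed simp
  show ?thesis by (intro bgr_eqI) (simp_all add: bperm_def Let_def i1 i2)
qed

lemma PP_star: "F \<in> PP k \<Longrightarrow> bstar F \<in> PP k"
proof (induction rule: PP.induct)
  case (PP_base Q)
  then show ?case using QP_star QS_star PP.PP_base by blast
next
  case (PP_series F F' H)
  then show ?case using series_star PP.PP_series by blast
next
  case (PP_parallel F Q H)
  then show ?case using parallel_star QP_star PP.PP_parallel by blast
next
  case (PP_perm F r)
  have "okk k F" using PP_perm.hyps by (rule PP_okk)
  then show ?case using bperm_star PP_perm.IH PP.PP_perm by metis
qed

lemma bminor_refl: "bminor G G"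
  by (rule bminor.minor_iso[OF iso_b_refl])

lemma bminor_restrictE:
  assumes "bminor G H" "finite (bE H)" "D \<subseteq> bE H"
  shows "bminor G (H\<lparr>bE := D\<rparr>)"
proof -
  have "\<And>F. finite F \<Longrightarrow> F \<subseteq> bE H \<Longrightarrow> bminor G (H\<lparr>bE := bE H - F\<rparr>)"
  proof -
    fix F assume "finite F" "F \<subseteq> bE H"
    then show "bminor G (H\<lparr>bE := bE H - F\<rparr>)"
    proof (induction rule: finite_induct)
      case empty
      have "H\<lparr>bE := bE H - {}\<rparr> = H" by simp
      then show ?case using assms(1) by simp
    next
      case (insert e F)
      then have IH: "bminor G (H\<lparr>bE := bE H - F\<rparr>)" by simp
      have e: "e \<in> bE (H\<lparr>bE := bE H - F\<rparr>)" using insert by simp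
      have "H\<lparr>bE := bE H - insert e F\<rparr> = (H\<lparr>bE := bE H - F\<rparr>)\<lparr>bE := bE (H\<lparr>bE := bE H - F\<rparr>) - {e}\<rparr>"
      proof -
        have "bE H - insert e F = bE H - F - {e}" by blast
        then show ?thesis by simp
      qed
      then have "del_edge (H\<lparr>bE := bE H - F\<rparr>) (H\<lparr>bE := bE H - insert e F\<rparr>)"
        unfolding del_edge_def using e by blast
      then show ?case using bminor.minor_step[OF IH] by blast
    qed
  qed
  moreover have "finite (bE H - D)" using assms(2) by simp
  moreover have "bE H - (bE H - D) = D" using assms(3) by blast
  ultimately show ?thesis by (metis Diff_subset)
qed

definition cfun :: "'a \<Rightarrow> 'a \<Rightarrow> 'a \<Rightarrow> 'a" where
  "cfun a b x = (if x = b then a else x)"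

lemma bminor_contract1:
  assumes m: "bminor G H" and e: "{a, b} \<in> bE H" and ab: "a \<noteq> b" and a: "a \<in> bV H" and b: "b \<in> bV H"
  shows "bminor G (img (cfun a b) (H\<lparr>bE := bE H - {{a, b}}\<rparr>))"
proof -
  let ?H = "H\<lparr>bE := bE H - {{a, b}}\<rparr>"
  let ?P = "{(x, y). {a, b} = {x, y}}"
  have P: "?P = {(a, b), (b, a)}" by (auto simp: doubleton_eq_iff)
  have PV: "?P \<subseteq> bV ?H \<times> bV ?H" using P a b by auto
  have ker: "\<forall>x\<in>bV ?H. \<forall>y\<in>bV ?H. cfun a b x = cfun a b y \<longleftrightarrow> (x, y) \<in> eqc ?P"
  proof (intro ballI iffI)
    fix x y assume "cfun a b x = cfun a b y"
    then have "x = y \<or> (x, y) \<in> ?P" using ab by (auto simp: cfun_def split: if_splits)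
    then show "(x, y) \<in> eqc ?P"
    proof
      assume "(x, y) \<in> ?P" then show ?thesis by (rule eqc_base)
    qed simp
  next
    fix x y assume "(x, y) \<in> eqc ?P"
    then show "cfun a b x = cfun a b y"
      by (rule eqc_respects) (auto simp: P cfun_def)
  qed
  have "quot ?H ?P (cfun a b) (img (cfun a b) ?H)"
    unfolding quot_iff using PV ker by blast
  then have "contract H (img (cfun a b) ?H)" unfolding contract_def using e by blast
  then show ?thesis using bminor.minor_step[OF m] by blast
qed

lemma cfun_image: "a \<in> S \<Longrightarrow> b \<in> S \<Longrightarrow> a \<noteq> b \<Longrightarrow> cfun a b ` S = S - {b}"
  by (auto simp: cfun_def image_iff)

lemma cfun_id: "b \<notin> e \<Longrightarrow> cfun a b ` e = e"
  by (auto simp: cfun_def image_iff)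

lemma cfun_map_id: "b \<notin> set xs \<Longrightarrow> map (cfun a b) xs = xs"
  by (induction xs) (auto simp: cfun_def)

lemma cfun_edges_id: "(\<forall>e\<in>E. b \<notin> e) \<Longrightarrow> (\<lambda>e. cfun a b ` e) ` E = E"
  using cfun_id by (metis (no_types, lifting) image_cong image_ident)

definition Mst :: "nat \<Rightarrow> nat \<Rightarrow> nat \<Rightarrow> nat bgr" where
  "Mst k m j = \<lparr>bV = {0..<2*k} - {k..<k+j}, bE = {{i, i+k} | i. j \<le> i \<and> i < m},
     bin = [0..<k], bout = [0..<j] @ [k+j..<2*k]\<rparr>"

lemma Mst_minor:
  assumes mk: "m \<le> k"
  shows "j \<le> m \<Longrightarrow> bminor (Mk k) (Mst k m j)"
proof (induction j)
  case 0
  have fin: "finite (bE (Mk k))" using okk_Mk[of k] unfolding okk_def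
    by (meson Pow_iff finite_Pow_iff finite_subset subsetI)
  have D: "{{i, i+k} | i. 0 \<le> i \<and> i < m} \<subseteq> bE (Mk k)" using mk by (auto simp: Mk_def)
  have "Mst k m 0 = (Mk k)\<lparr>bE := {{i, i+k} | i. 0 \<le> i \<and> i < m}\<rparr>"
    by (rule bgr_eqI) (simp_all add: Mst_def Mk_def)
  then show ?case using bminor_restrictE[OF bminor_refl fin D] by simp
next
  case (Suc j)
  then have j: "j < m" and IH: "bminor (Mk k) (Mst k m j)" by simp_all
  let ?H = "Mst k m j"
  have e: "{j, j+k} \<in> bE ?H" using j by (auto simp: Mst_def)
  have ab: "j \<noteq> j + k" using j mk by simp
  have a: "j \<in> bV ?H" using j mk by (simp add: Mst_def)
  have b: "j + k \<in> bV ?H" using j mk by (simp add: Mst_def)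
  have "img (cfun j (j+k)) (?H\<lparr>bE := bE ?H - {{j, j+k}}\<rparr>) = Mst k m (Suc j)"
  proof (rule bgr_eqI)
    show "bV (img (cfun j (j+k)) (?H\<lparr>bE := bE ?H - {{j, j+k}}\<rparr>)) = bV (Mst k m (Suc j))"
      using cfun_image[OF a b ab] by (auto simp: Mst_def)
    have E: "bE ?H - {{j, j+k}} = bE (Mst k m (Suc j))"
    proof -
      have inj: "\<And>i. {i, i + k} = {j, j + k} \<Longrightarrow> i = j" using mk j by (auto simp: doubleton_eq_iff)
      show ?thesis
      proof (intro subset_antisym subsetI)
        fix e assume "e \<in> bE ?H - {{j, j+k}}"
        then obtain i where i: "e = {i, i+k}" "j \<le> i" "i < m" "e \<noteq> {j, j+k}" by (auto simp: Mst_def)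
        then have "i \<noteq> j" by blast
        then show "e \<in> bE (Mst k m (Suc j))" using i unfolding Mst_def by auto
      next
        fix e assume "e \<in> bE (Mst k m (Suc j))"
        then have "\<exists>i. e = {i, i+k} \<and> Suc j \<le> i \<and> i < m" by (simp add: Mst_def)
        then obtain i where i: "e = {i, i+k}" "Suc j \<le> i" "i < m" by blast
        then have "e \<noteq> {j, j+k}" using inj by (metis Suc_le_lessD less_irrefl_nat)
        moreover have "e \<in> bE ?H" using i unfolding Mst_def by auto
        ultimately show "e \<in> bE ?H - {{j, j+k}}" by simp
      qed
    qed
    have "\<forall>e\<in>bE (Mst k m (Suc j)). j + k \<notin> e" using mk j by (auto simp: Mst_def)
    then show "bE (img (cfun j (j+k)) (?H\<lparr>bE := bE ?H - {{j, j+k}}\<rparr>)) = bE (Mst k m (Suc j))"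
      using cfun_edges_id E by simp
    show "bin (img (cfun j (j+k)) (?H\<lparr>bE := bE ?H - {{j, j+k}}\<rparr>)) = bin (Mst k m (Suc j))"
      by (simp add: Mst_def cfun_map_id)
    have u: "[k+j..<2*k] = (k + j) # [k + Suc j..<2*k]" using j mk by (simp add: upt_conv_Cons)
    show "bout (img (cfun j (j+k)) (?H\<lparr>bE := bE ?H - {{j, j+k}}\<rparr>)) = bout (Mst k m (Suc j))"
      unfolding Mst_def using u by (simp add: cfun_map_id cfun_def add.commute)
  qed
  then show ?case using bminor_contract1[OF IH e ab a b] by simp
qed

definition Mprime :: "nat \<Rightarrow> nat \<Rightarrow> nat bgr" where
  "Mprime k m = \<lparr>bV = {0..<2*k} - {k..<k+m}, bE = {}, bin = [0..<k], bout = [0..<m] @ [k+m..<2*k]\<rparr>"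

lemma Mprime_QS: "m \<le> k \<Longrightarrow> Mprime k m \<in> QS k"
proof -
  assume mk: "m \<le> k"
  have "Mst k m m = Mprime k m" unfolding Mst_def Mprime_def by simp
  then show ?thesis using Mst_minor[OF mk, of m] unfolding QS_def by simp
qed

lemma finite_bE_Ck: "finite (bE (Ck k))"
  using okk_Ck[of k] unfolding okk_def by (meson Pow_iff finite_Pow_iff finite_subset subsetI)

definition Qst :: "nat \<Rightarrow> nat \<Rightarrow> nat \<Rightarrow> nat bgr" where
  "Qst k m j = \<lparr>bV = {0..<2*k} - {m..<m+j},
     bE = {e. m + j < k \<and> e = {m - 1, m + j}} \<union> {{i, i+1} | i. m + j \<le> i \<and> i < k - 1},
     bin = [0..<m] @ replicate j (m - 1) @ [m+j..<k], bout = [k..<2*k]\<rparr>"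

lemma Qst_minor:
  assumes m1: "1 \<le> m" and mk: "m \<le> k"
  shows "m + j \<le> k \<Longrightarrow> bminor (Ck k) (Qst k m j)"
proof (induction j)
  case 0
  have D: "bE (Qst k m 0) \<subseteq> bE (Ck k)"
  proof
    fix e assume "e \<in> bE (Qst k m 0)"
    then have "\<exists>i. e = {i, i+1} \<and> i < k - 1"
      unfolding Qst_def using m1 by (auto intro: exI[of _ "m - 1"])
    then show "e \<in> bE (Ck k)" unfolding Ck_def by auto
  qed
  have "Qst k m 0 = (Ck k)\<lparr>bE := bE (Qst k m 0)\<rparr>"
  proof (rule bgr_eqI)
    show "bin (Qst k m 0) = bin ((Ck k)\<lparr>bE := bE (Qst k m 0)\<rparr>)"
    proof -
      have "[0..<m] @ [m..<k] = [0..<k]" using mk by (metis le_add_diff_inverse upt_add_eq_append zero_le)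
      then show ?thesis by (simp add: Qst_def Ck_def)
    qed
  qed (simp_all add: Qst_def Ck_def)
  then show ?case using bminor_restrictE[OF bminor_refl finite_bE_Ck D] by simp
next
  case (Suc j)
  then have j: "m + j < k" and IH: "bminor (Ck k) (Qst k m j)" by simp_all
  let ?H = "Qst k m j" let ?a = "m - 1" let ?b = "m + j"
  have e: "{?a, ?b} \<in> bE ?H" using j by (simp add: Qst_def)
  have ab: "?a \<noteq> ?b" using m1 by simp
  have a: "?a \<in> bV ?H" using m1 mk by (simp add: Qst_def) arith
  have b: "?b \<in> bV ?H" using j by (simp add: Qst_def)
  have "img (cfun ?a ?b) (?H\<lparr>bE := bE ?H - {{?a, ?b}}\<rparr>) = Qst k m (Suc j)"
  proof (rule bgr_eqI)
    show "bV (img (cfun ?a ?b) (?H\<lparr>bE := bE ?H - {{?a, ?b}}\<rparr>)) = bV (Qst k m (Suc j))"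
      using cfun_image[OF a b ab] by (auto simp: Qst_def)
    have E1: "bE ?H - {{?a, ?b}} = {{i, i+1} | i. m + j \<le> i \<and> i < k - 1}"
    proof (intro subset_antisym subsetI)
      fix e assume "e \<in> bE ?H - {{?a, ?b}}"
      then have "e \<in> bE ?H" "e \<noteq> {?a, ?b}" by simp_all
      then show "e \<in> {{i, i+1} | i. m + j \<le> i \<and> i < k - 1}" unfolding Qst_def by simp
    next
      fix e assume "e \<in> {{i, i+1} | i. m + j \<le> i \<and> i < k - 1}"
      then obtain i where i: "e = {i, i+1}" "m + j \<le> i" "i < k - 1" by blast
      then have "?a \<notin> e" using m1 by auto
      then have "e \<noteq> {?a, ?b}" by auto
      moreover have "e \<in> bE ?H" using i by (auto simp: Qst_def)
      ultimately show "e \<in> bE ?H - {{?a, ?b}}" by simp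
    qed
    have E2: "(\<lambda>e. cfun ?a ?b ` e) ` {{i, i+1} | i. m + j \<le> i \<and> i < k - 1} = bE (Qst k m (Suc j))"
    proof (intro subset_antisym subsetI)
      fix e assume "e \<in> (\<lambda>e. cfun ?a ?b ` e) ` {{i, i+1} | i. m + j \<le> i \<and> i < k - 1}"
      then obtain i where i: "e = cfun ?a ?b ` {i, i+1}" "m + j \<le> i" "i < k - 1" by blast
      show "e \<in> bE (Qst k m (Suc j))"
      proof (cases "i = m + j")
        case True
        then have "e = {m - 1, m + Suc j}" using i by (auto simp: cfun_def)
        moreover have "m + Suc j < k" using i True by simp
        ultimately show ?thesis by (simp add: Qst_def)
      next
        case False
        then have "e = {i, i + 1}" using i by (simp add: cfun_def)
        then have "\<exists>i'. e = {i', i'+1} \<and> m + Suc j \<le> i' \<and> i' < k - 1" using i False by auto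
        then show ?thesis by (simp add: Qst_def)
      qed
    next
      fix e assume "e \<in> bE (Qst k m (Suc j))"
      then have "(m + Suc j < k \<and> e = {m - 1, m + Suc j}) \<or> (\<exists>i. e = {i, i+1} \<and> m + Suc j \<le> i \<and> i < k - 1)"
        by (simp add: Qst_def) blast
      then show "e \<in> (\<lambda>e. cfun ?a ?b ` e) ` {{i, i+1} | i. m + j \<le> i \<and> i < k - 1}"
      proof (elim disjE exE conjE)
        assume h: "m + Suc j < k" "e = {m - 1, m + Suc j}"
        have "cfun ?a ?b ` {m + j, m + j + 1} = e" using h by (auto simp: cfun_def)
        moreover have "{m + j, m + j + 1} \<in> {{i, i+1} | i. m + j \<le> i \<and> i < k - 1}" using h by auto
        ultimately show ?thesis by (metis (no_types, lifting) image_eqI)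
      next
        fix i assume h: "e = {i, i+1}" "m + Suc j \<le> i" "i < k - 1"
        have "cfun ?a ?b ` {i, i + 1} = e" using h by (simp add: cfun_def)
        moreover have "{i, i + 1} \<in> {{i, i+1} | i. m + j \<le> i \<and> i < k - 1}" using h by auto
        ultimately show ?thesis by (metis (no_types, lifting) image_eqI)
      qed
    qed
    show "bE (img (cfun ?a ?b) (?H\<lparr>bE := bE ?H - {{?a, ?b}}\<rparr>)) = bE (Qst k m (Suc j))"
      using E1 E2 by simp
    have u: "[m+j..<k] = (m + j) # [m + Suc j..<k]" using j by (simp add: upt_conv_Cons)
    have n1: "m + j \<notin> set [0..<m]" by simp
    have n2: "m + j \<notin> set (replicate j (m - 1))" using m1 by (simp add: in_set_replicate) arith
    have n3: "m + j \<notin> set [m + Suc j..<k]" by simp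
    show "bin (img (cfun ?a ?b) (?H\<lparr>bE := bE ?H - {{?a, ?b}}\<rparr>)) = bin (Qst k m (Suc j))"
      unfolding Qst_def using u cfun_map_id[OF n1] cfun_map_id[OF n2] cfun_map_id[OF n3]
      by (simp add: cfun_def replicate_append_same[symmetric])
    have n4: "m + j \<notin> set [k..<2*k]" using j by simp
    show "bout (img (cfun ?a ?b) (?H\<lparr>bE := bE ?H - {{?a, ?b}}\<rparr>)) = bout (Qst k m (Suc j))"
      unfolding Qst_def using cfun_map_id[OF n4] by simp
  qed
  then show ?case using bminor_contract1[OF IH e ab a b] by simp
qed

definition Qpp :: "nat \<Rightarrow> nat \<Rightarrow> nat bgr" where
  "Qpp k m = \<lparr>bV = {0..<2*k} - {m..<k}, bE = {}, bin = [0..<m] @ replicate (k - m) (m - 1), bout = [k..<2*k]\<rparr>"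

lemma Qpp_QP: "1 \<le> m \<Longrightarrow> m \<le> k \<Longrightarrow> Qpp k m \<in> QP k"
proof -
  assume m1: "1 \<le> m" and mk: "m \<le> k"
  have "Qst k m (k - m) = Qpp k m"
    by (rule bgr_eqI) (use mk in \<open>auto simp: Qst_def Qpp_def\<close>)
  then show ?thesis using Qst_minor[OF m1 mk, of "k - m"] mk unfolding QP_def by simp
qed

definition Q0 :: "nat \<Rightarrow> nat bgr" where
  "Q0 k = \<lparr>bV = {0..<2*k-1}, bE = {}, bin = [0..<k], bout = [k..<2*k-1] @ [k-1]\<rparr>"

lemma Q0_QP:
  assumes k: "1 \<le> k" shows "Q0 k \<in> QP k"
proof -
  let ?H = "(Ck k)\<lparr>bE := {{k - 1, 2*k - 1}}\<rparr>"
  have D: "{{k - 1, 2*k - 1}} \<subseteq> bE (Ck k)" using k by (simp add: Ck_def)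
  have m: "bminor (Ck k) ?H" using bminor_restrictE[OF bminor_refl finite_bE_Ck D] .
  have e: "{k - 1, 2*k - 1} \<in> bE ?H" by simp
  have ab: "k - 1 \<noteq> 2*k - 1" using k by simp
  have a: "k - 1 \<in> bV ?H" using k by (simp add: Ck_def)
  have b: "2*k - 1 \<in> bV ?H" using k by (simp add: Ck_def)
  have "img (cfun (k - 1) (2*k - 1)) (?H\<lparr>bE := bE ?H - {{k - 1, 2*k - 1}}\<rparr>) = Q0 k"
  proof (rule bgr_eqI)
    show "bV (img (cfun (k - 1) (2*k - 1)) (?H\<lparr>bE := bE ?H - {{k - 1, 2*k - 1}}\<rparr>)) = bV (Q0 k)"
      using cfun_image[OF a b ab] k by (auto simp: Q0_def Ck_def)
    have n1: "2*k - 1 \<notin> set [0..<k]" using k by simp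
    show "bin (img (cfun (k - 1) (2*k - 1)) (?H\<lparr>bE := bE ?H - {{k - 1, 2*k - 1}}\<rparr>)) = bin (Q0 k)"
      using cfun_map_id[OF n1] by (simp add: Q0_def Ck_def)
    have u: "[k..<2*k] = [k..<2*k-1] @ [2*k-1]"
    proof -
      have "2*k = Suc (2*k - 1)" "k \<le> 2*k - 1" using k by simp_all
      then show ?thesis by (metis upt_Suc_append)
    qed
    have n2: "2*k - 1 \<notin> set [k..<2*k-1]" by simp
    show "bout (img (cfun (k - 1) (2*k - 1)) (?H\<lparr>bE := bE ?H - {{k - 1, 2*k - 1}}\<rparr>)) = bout (Q0 k)"
      using cfun_map_id[OF n2] u by (simp add: Q0_def Ck_def cfun_def)
  qed (simp_all add: Q0_def)
  then show ?thesis using bminor_contract1[OF m e ab a b] unfolding QP_def by simp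
qed

lemma zip_pair_in: "i < length xs \<Longrightarrow> i < length ys \<Longrightarrow> (f (xs ! i), g (ys ! i)) \<in> set (zip (map f xs) (map g ys))"
  by (auto simp: set_zip intro!: exI[of _ i])

lemma zip_pair_cases: "p \<in> set (zip xs ys) \<Longrightarrow> \<exists>i. i < length xs \<and> i < length ys \<and> p = (xs ! i, ys ! i)"
  by (auto simp: set_zip)

lemma zip_map_cases: "(x, y) \<in> set (zip (map f xs) (map g ys)) \<Longrightarrow> \<exists>i. i < length xs \<and> i < length ys \<and> x = f (xs ! i) \<and> y = g (ys ! i)"
  by (auto simp: set_zip)

lemma relabel_left:
  assumes q: "quot (dunion_ser N G) (set (zip (map Inl (bout N)) (map Inr (bin G)))) h H"
    and okN: "okk k N" and okG: "okk k G" and EN: "bE N = {}" and VN: "bV N = set (bout N)"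
    and dN: "distinct (bout N)" and inN: "bin N = map ((!) (bout N)) I" and I: "\<forall>i\<in>set I. i < k"
  shows "H = img (h \<circ> Inr) (G\<lparr>bin := map ((!) (bin G)) I\<rparr>)" "inj_on (h \<circ> Inr) (bV G)"
proof -
  let ?D = "dunion_ser N G"
  let ?P = "set (zip (map Inl (bout N)) (map Inr (bin G)))"
  have lN: "length (bout N) = k" "length (bin N) = k" and lG: "length (bin G) = k" "length (bout G) = k"
    and sG: "set (bin G) \<subseteq> bV G" using okN okG unfolding okk_def by simp_all
  have H: "H = img h ?D" and ker: "\<forall>x\<in>bV ?D. \<forall>y\<in>bV ?D. h x = h y \<longleftrightarrow> (x, y) \<in> eqc ?P"
    using q unfolding quot_iff by blast+
  have pair: "h (Inl (bout N ! i)) = h (Inr (bin G ! i))" if "i < k" for i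
    using quot_pair[OF q zip_pair_in] that lN lG by simp
  have V: "h ` bV ?D = (h \<circ> Inr) ` bV G"
  proof (intro subset_antisym subsetI)
    fix y assume "y \<in> h ` bV ?D"
    then obtain x where x: "x \<in> bV ?D" "y = h x" by blast
    show "y \<in> (h \<circ> Inr) ` bV G"
    proof (cases x)
      case (Inl n)
      then have "n \<in> set (bout N)" using x VN by (auto simp: dunion_ser_def)
      then obtain i where i: "i < k" "n = bout N ! i" using lN by (auto simp: in_set_conv_nth)
      then have "y = h (Inr (bin G ! i))" using pair x Inl by simp
      moreover have "bin G ! i \<in> bV G" using sG i lG by (metis nth_mem subsetD)
      ultimately show ?thesis by simp
    next
      case (Inr a)
      then show ?thesis using x by (auto simp: dunion_ser_def)
    qed
  next
    fix y assume "y \<in> (h \<circ> Inr) ` bV G" then show "y \<in> h ` bV ?D" by (auto simp: dunion_ser_def)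
  qed
  have E: "(\<lambda>e. h ` e) ` bE ?D = (\<lambda>e. (h \<circ> Inr) ` e) ` bE G"
    using EN by (simp add: dunion_ser_def image_image image_comp)
  have In: "map h (bin ?D) = map (h \<circ> Inr) (map ((!) (bin G)) I)"
    using I pair by (simp add: dunion_ser_def inN)
  show "H = img (h \<circ> Inr) (G\<lparr>bin := map ((!) (bin G)) I\<rparr>)"
    unfolding H by (rule bgr_eqI) (simp_all only: img_sel V E In, simp_all add: dunion_ser_def)
  define \<phi> where "\<phi> x = (case x of Inr a \<Rightarrow> a | Inl n \<Rightarrow> bin G ! (the_inv_into {..<k} ((!) (bout N)) n))" for x
  have injN: "inj_on ((!) (bout N)) {..<k}" using dN lN by (simp add: inj_on_def nth_eq_iff_index_eq)
  show "inj_on (h \<circ> Inr) (bV G)"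
  proof (rule inj_onI)
    fix a b assume a: "a \<in> bV G" and b: "b \<in> bV G" and hab: "(h \<circ> Inr) a = (h \<circ> Inr) b"
    have "(Inr a, Inr b) \<in> eqc ?P" using ker a b hab by (auto simp: dunion_ser_def)
    moreover have resp: "\<phi> x = \<phi> y" if xy: "(x, y) \<in> ?P" for x y
    proof -
      from zip_map_cases[OF xy] obtain i where i0: "i < length (bout N)" "x = Inl (bout N ! i)" "y = Inr (bin G ! i)" by blast
      then have i: "i < k" "x = Inl (bout N ! i)" "y = Inr (bin G ! i)" using lN lG by simp_all
      have "the_inv_into {..<k} ((!) (bout N)) (bout N ! i) = i"
        using the_inv_into_f_f[OF injN] i by simp
      then show "\<phi> x = \<phi> y" using i by (simp add: \<phi>_def)
    qed
    ultimately have "\<phi> (Inr a) = \<phi> (Inr b)" by (rule eqc_respects)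
    then show "a = b" by (simp add: \<phi>_def)
  qed
qed

lemma relabel_right:
  assumes q: "quot (dunion_ser G N) (set (zip (map Inl (bout G)) (map Inr (bin N)))) h H"
    and okN: "okk k N" and okG: "okk k G" and EN: "bE N = {}" and VN: "bV N = set (bin N)"
    and dN: "distinct (bin N)" and outN: "bout N = map ((!) (bin N)) I" and I: "\<forall>i\<in>set I. i < k"
  shows "H = img (h \<circ> Inl) (G\<lparr>bout := map ((!) (bout G)) I\<rparr>)" "inj_on (h \<circ> Inl) (bV G)"
proof -
  let ?D = "dunion_ser G N"
  let ?P = "set (zip (map Inl (bout G)) (map Inr (bin N)))"
  have lN: "length (bout N) = k" "length (bin N) = k" and lG: "length (bin G) = k" "length (bout G) = k"
    and sG: "set (bout G) \<subseteq> bV G" using okN okG unfolding okk_def by simp_all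
  have H: "H = img h ?D" and ker: "\<forall>x\<in>bV ?D. \<forall>y\<in>bV ?D. h x = h y \<longleftrightarrow> (x, y) \<in> eqc ?P"
    using q unfolding quot_iff by blast+
  have pair: "h (Inr (bin N ! i)) = h (Inl (bout G ! i))" if "i < k" for i
    using quot_pair[OF q zip_pair_in] that lN lG by simp
  have V: "h ` bV ?D = (h \<circ> Inl) ` bV G"
  proof (intro subset_antisym subsetI)
    fix y assume "y \<in> h ` bV ?D"
    then obtain x where x: "x \<in> bV ?D" "y = h x" by blast
    show "y \<in> (h \<circ> Inl) ` bV G"
    proof (cases x)
      case (Inr n)
      then have "n \<in> set (bin N)" using x VN by (auto simp: dunion_ser_def)
      then obtain i where i: "i < k" "n = bin N ! i" using lN by (auto simp: in_set_conv_nth)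
      then have "y = h (Inl (bout G ! i))" using pair x Inr by simp
      moreover have "bout G ! i \<in> bV G" using sG i lG by (metis nth_mem subsetD)
      ultimately show ?thesis by simp
    next
      case (Inl a)
      then show ?thesis using x by (auto simp: dunion_ser_def)
    qed
  next
    fix y assume "y \<in> (h \<circ> Inl) ` bV G" then show "y \<in> h ` bV ?D" by (auto simp: dunion_ser_def)
  qed
  have E: "(\<lambda>e. h ` e) ` bE ?D = (\<lambda>e. (h \<circ> Inl) ` e) ` bE G"
    using EN by (simp add: dunion_ser_def image_image image_comp)
  have Out: "map h (bout ?D) = map (h \<circ> Inl) (map ((!) (bout G)) I)"
    using I pair by (simp add: dunion_ser_def outN)
  show "H = img (h \<circ> Inl) (G\<lparr>bout := map ((!) (bout G)) I\<rparr>)"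
    unfolding H by (rule bgr_eqI) (simp_all only: img_sel V E Out, simp_all add: dunion_ser_def)
  define \<phi> where "\<phi> x = (case x of Inl a \<Rightarrow> a | Inr n \<Rightarrow> bout G ! (the_inv_into {..<k} ((!) (bin N)) n))" for x
  have injN: "inj_on ((!) (bin N)) {..<k}" using dN lN by (simp add: inj_on_def nth_eq_iff_index_eq)
  show "inj_on (h \<circ> Inl) (bV G)"
  proof (rule inj_onI)
    fix a b assume a: "a \<in> bV G" and b: "b \<in> bV G" and hab: "(h \<circ> Inl) a = (h \<circ> Inl) b"
    have "(Inl a, Inl b) \<in> eqc ?P" using ker a b hab by (auto simp: dunion_ser_def)
    moreover have resp: "\<phi> x = \<phi> y" if xy: "(x, y) \<in> ?P" for x y
    proof -
      from zip_map_cases[OF xy] obtain i where i0: "i < length (bout G)" "x = Inl (bout G ! i)" "y = Inr (bin N ! i)" by blast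
      then have i: "i < k" "x = Inl (bout G ! i)" "y = Inr (bin N ! i)" using lN lG by simp_all
      have "the_inv_into {..<k} ((!) (bin N)) (bin N ! i) = i"
        using the_inv_into_f_f[OF injN] i by simp
      then show "\<phi> x = \<phi> y" using i by (simp add: \<phi>_def)
    qed
    ultimately have "\<phi> (Inl a) = \<phi> (Inl b)" by (rule eqc_respects)
    then show "a = b" by (simp add: \<phi>_def)
  qed
qed

lemma Q0_in: "i < k \<Longrightarrow> bin (Q0 k) ! i = i" by (simp add: Q0_def)
lemma Q0_out: "1 \<le> k \<Longrightarrow> i < k \<Longrightarrow> bout (Q0 k) ! i = (if i < k - 1 then k + i else k - 1)"
  by (auto simp: Q0_def nth_append)
lemma Q0_len: "length (bin (Q0 k)) = k" "1 \<le> k \<Longrightarrow> length (bout (Q0 k)) = k"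
  by (simp_all add: Q0_def)

lemma merge_lemma:
  assumes k: "1 \<le> k" and okG: "okk k G"
    and q: "quot (dunion_par G (Q0 k)) (set (zip (map Inl (bin G)) (map Inr (bin (Q0 k)))) \<union>
        set (zip (map Inl (bout G)) (map Inr (bout (Q0 k))))) h H"
  shows "H = img (h \<circ> Inl) G"
    "\<forall>a\<in>bV G. \<forall>b\<in>bV G. h (Inl a) = h (Inl b) \<longleftrightarrow> (a, b) \<in> eqc {(bin G ! (k - 1), bout G ! (k - 1))}"
proof -
  let ?D = "dunion_par G (Q0 k)"
  let ?P = "set (zip (map Inl (bin G)) (map Inr (bin (Q0 k)))) \<union> set (zip (map Inl (bout G)) (map Inr (bout (Q0 k))))"
  let ?R = "{(bin G ! (k - 1), bout G ! (k - 1))}"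
  have lG: "length (bin G) = k" "length (bout G) = k" and sG: "set (bin G) \<subseteq> bV G" "set (bout G) \<subseteq> bV G"
    using okG unfolding okk_def by simp_all
  have lQ: "length (bin (Q0 k)) = k" "length (bout (Q0 k)) = k" using Q0_len k by simp_all
  have H: "H = img h ?D" and ker: "\<forall>x\<in>bV ?D. \<forall>y\<in>bV ?D. h x = h y \<longleftrightarrow> (x, y) \<in> eqc ?P"
    using q unfolding quot_iff by blast+
  have pin: "(Inl (bin G ! i), Inr i) \<in> ?P" if "i < k" for i
  proof -
    have "(Inl (bin G ! i), Inr (bin (Q0 k) ! i)) \<in> set (zip (map Inl (bin G)) (map Inr (bin (Q0 k))))"
      by (rule zip_pair_in) (use lG lQ that in simp_all)
    then show ?thesis unfolding Q0_in[OF that] by (rule UnI1)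
  qed
  have pout: "(Inl (bout G ! i), Inr (bout (Q0 k) ! i)) \<in> ?P" if "i < k" for i
  proof -
    have "(Inl (bout G ! i), Inr (bout (Q0 k) ! i)) \<in> set (zip (map Inl (bout G)) (map Inr (bout (Q0 k))))"
      by (rule zip_pair_in) (use lG lQ that in simp_all)
    then show ?thesis by (rule UnI2)
  qed
  have V: "h ` bV ?D = (h \<circ> Inl) ` bV G"
  proof (intro subset_antisym subsetI)
    fix y assume "y \<in> h ` bV ?D"
    then obtain x where x: "x \<in> bV ?D" "y = h x" by blast
    show "y \<in> (h \<circ> Inl) ` bV G"
    proof (cases x)
      case (Inl a)
      then show ?thesis using x by (auto simp: dunion_par_def)
    next
      case (Inr j)
      then have j: "j < 2*k - 1" using x by (auto simp: dunion_par_def Q0_def)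
      show ?thesis
      proof (cases "j < k")
        case True
        then have "y = h (Inl (bin G ! j))" using quot_pair[OF q pin[OF True]] x Inr by simp
        moreover have "bin G ! j \<in> bV G" using sG True lG by (metis nth_mem subsetD)
        ultimately show ?thesis by simp
      next
        case False
        then have j': "j - k < k" "j - k < k - 1" using j by simp_all
        have "bout (Q0 k) ! (j - k) = j" using Q0_out[OF k j'(1)] j' False by simp
        then have "y = h (Inl (bout G ! (j - k)))" using quot_pair[OF q pout[OF j'(1)]] x Inr by simp
        moreover have "bout G ! (j - k) \<in> bV G" using sG j' lG by (metis nth_mem subsetD)
        ultimately show ?thesis by simp
      qed
    qed
  next
    fix y assume "y \<in> (h \<circ> Inl) ` bV G" then show "y \<in> h ` bV ?D" by (auto simp: dunion_par_def)
  qed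
  have E: "(\<lambda>e. h ` e) ` bE ?D = (\<lambda>e. (h \<circ> Inl) ` e) ` bE G"
    by (simp add: dunion_par_def image_image image_comp Q0_def)
  show "H = img (h \<circ> Inl) G"
    unfolding H by (rule bgr_eqI) (simp_all only: img_sel V E, simp_all add: dunion_par_def)
  show "\<forall>a\<in>bV G. \<forall>b\<in>bV G. h (Inl a) = h (Inl b) \<longleftrightarrow> (a, b) \<in> eqc ?R"
  proof (intro ballI iffI)
    fix a b assume a: "a \<in> bV G" and b: "b \<in> bV G"
    {
      assume "(a, b) \<in> eqc ?R"
      then have "(Inl a, Inl b) \<in> eqc ?P"
      proof (rule eqc_map)
        fix x y assume "(x, y) \<in> ?R"
        then have xy: "x = bin G ! (k - 1)" "y = bout G ! (k - 1)" by simp_all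
        have k1: "k - 1 < k" using k by simp
        have "(Inl x, Inr (k - 1)) \<in> ?P" using pin[OF k1] xy by simp
        moreover have "(Inl y, Inr (k - 1)) \<in> ?P" using pout[OF k1] xy Q0_out[OF k k1] by simp
        ultimately show "(Inl x, Inl y) \<in> eqc ?P" by (meson eqc_base eqc_base' eqc_trans)
      qed
      then show "h (Inl a) = h (Inl b)" using ker a b by (auto simp: dunion_par_def)
    }
    {
      assume hab: "h (Inl a) = h (Inl b)"
      define \<phi> where "\<phi> x = eqc ?R `` {case x of Inl c \<Rightarrow> c | Inr j \<Rightarrow> (if j < k then bin G ! j else bout G ! (j - k))}" for x
      have "(Inl a, Inl b) \<in> eqc ?P" using ker a b hab by (auto simp: dunion_par_def)
      moreover have resp: "\<phi> x = \<phi> y" if xy: "(x, y) \<in> ?P" for x y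
      proof (cases "(x, y) \<in> set (zip (map Inl (bin G)) (map Inr (bin (Q0 k))))")
        case True
        from zip_map_cases[OF True] obtain i where i: "i < length (bin G)" "x = Inl (bin G ! i)" "y = Inr (bin (Q0 k) ! i)" by blast
        then show ?thesis using lG Q0_in by (simp add: \<phi>_def)
      next
        case False
        then have "(x, y) \<in> set (zip (map Inl (bout G)) (map Inr (bout (Q0 k))))" using xy by simp
        from zip_map_cases[OF this] obtain i where i: "i < length (bout G)" "x = Inl (bout G ! i)" "y = Inr (bout (Q0 k) ! i)" by blast
        show ?thesis
        proof (cases "i < k - 1")
          case True
          then show ?thesis using i lG Q0_out[OF k] by (simp add: \<phi>_def)
        next
          case False
          then have ik: "i = k - 1" using i lG by simp
          have "y = Inr (k - 1)" using i ik Q0_out[OF k] k by simp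
          then have "\<phi> y = eqc ?R `` {bin G ! (k - 1)}" using k by (simp add: \<phi>_def)
          also have "\<dots> = eqc ?R `` {bout G ! (k - 1)}" by (simp add: eqc_class_eq eqc_base)
          also have "\<dots> = \<phi> x" using i ik by (simp add: \<phi>_def)
          finally show ?thesis by simp
        qed
      qed
      ultimately have "\<phi> (Inl a) = \<phi> (Inl b)" by (rule eqc_respects)
      then show "(a, b) \<in> eqc ?R" by (simp add: \<phi>_def eqc_class_eq)
    }
  qed
qed

definition Im :: "nat \<Rightarrow> nat \<Rightarrow> nat list" where
  "Im k m = [0..<m] @ replicate (k - m) (m - 1)"

lemma Im_len: "m \<le> k \<Longrightarrow> length (Im k m) = k" by (simp add: Im_def)
lemma Im_nth: "m \<le> k \<Longrightarrow> i < k \<Longrightarrow> Im k m ! i = (if i < m then i else m - 1)"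
  by (simp add: Im_def nth_append)
lemma Im_lt: "1 \<le> m \<Longrightarrow> m \<le> k \<Longrightarrow> \<forall>i\<in>set (Im k m). i < k"
  by (auto simp: Im_def)

lemma zip_subset: "set xs \<subseteq> A \<Longrightarrow> set ys \<subseteq> B \<Longrightarrow> set (zip xs ys) \<subseteq> A \<times> B"
  by (auto dest: set_zip_leftD set_zip_rightD)

lemma PV_par: "okk k F \<Longrightarrow> okk k Q \<Longrightarrow>
  set (zip (map Inl (bin F)) (map Inr (bin Q))) \<union> set (zip (map Inl (bout F)) (map Inr (bout Q)))
   \<subseteq> bV (dunion_par F Q) \<times> bV (dunion_par F Q)"
proof -
  assume a: "okk k F" "okk k Q"
  have "set (map Inl (bin F)) \<subseteq> bV (dunion_par F Q)" "set (map Inl (bout F)) \<subseteq> bV (dunion_par F Q)"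
    "set (map Inr (bin Q)) \<subseteq> bV (dunion_par F Q)" "set (map Inr (bout Q)) \<subseteq> bV (dunion_par F Q)"
    using a unfolding okk_def dunion_par_def by auto
  then show ?thesis using zip_subset by (metis Un_least)
qed

lemma PV_ser: "okk k F \<Longrightarrow> okk k F' \<Longrightarrow>
  set (zip (map Inl (bout F)) (map Inr (bin F'))) \<subseteq> bV (dunion_ser F F') \<times> bV (dunion_ser F F')"
proof -
  assume a: "okk k F" "okk k F'"
  have "set (map Inl (bout F)) \<subseteq> bV (dunion_ser F F')" "set (map Inr (bin F')) \<subseteq> bV (dunion_ser F F')"
    using a unfolding okk_def dunion_ser_def by auto
  then show ?thesis using zip_subset by metis
qed

lemma N_exists:
  assumes m1: "1 \<le> m" and mk: "m \<le> k"
  shows "\<exists>N\<in>PP k. bE N = {} \<and> bV N = set (bout N) \<and> distinct (bout N) \<and> bin N = map ((!) (bout N)) (Im k m)"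
proof -
  let ?M = "Mprime k m" and ?Q = "Qpp k m"
  let ?D = "dunion_par ?M ?Q"
  let ?P = "set (zip (map Inl (bin ?M)) (map Inr (bin ?Q))) \<union> set (zip (map Inl (bout ?M)) (map Inr (bout ?Q)))"
  have okM: "okk k ?M" using PP_okk PP.PP_base Mprime_QS[OF mk] by blast
  have okQ: "okk k ?Q" using PP_okk PP.PP_base Qpp_QP[OF m1 mk] by blast
  have okD: "okk k ?D" using okk_dunion_par[OF okM okQ] .
  have PV: "?P \<subseteq> bV ?D \<times> bV ?D" by (rule PV_par[OF okM okQ])
  obtain h :: "nat + nat \<Rightarrow> nat" where q: "quot ?D ?P h (img h ?D)"
    using quot_exists[of ?D ?P] okD PV unfolding okk_def by blast
  let ?N = "img h ?D"
  have NPP: "?N \<in> PP k"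
  proof (rule PP.PP_parallel)
    show "?M \<in> PP k" using Mprime_QS[OF mk] by (rule PP.PP_base[OF UnI2])
    show "?Q \<in> QP k" using Qpp_QP[OF m1 mk] .
    show "parallel ?M ?Q ?N" unfolding parallel_def using q by blast
  qed
  have Min: "bin ?M ! i = i" if "i < k" for i using that by (simp add: Mprime_def)
  have Mout: "bout ?M ! i = (if i < m then i else k + i)" if "i < k" for i
    using that mk by (simp add: Mprime_def nth_append)
  have Qin: "bin ?Q ! i = (if i < m then i else m - 1)" if "i < k" for i
    using that by (simp add: Qpp_def nth_append)
  have Qout: "bout ?Q ! i = k + i" if "i < k" for i using that by (simp add: Qpp_def)
  have lens: "length (bin ?M) = k" "length (bout ?M) = k" "length (bin ?Q) = k" "length (bout ?Q) = k"
    using mk by (simp_all add: Mprime_def Qpp_def)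
  have pin: "h (Inl i) = h (Inr (if i < m then i else m - 1))" if "i < k" for i
  proof -
    have "(Inl (bin ?M ! i), Inr (bin ?Q ! i)) \<in> set (zip (map Inl (bin ?M)) (map Inr (bin ?Q)))"
      by (rule zip_pair_in) (use lens that in simp_all)
    then have "(Inl (bin ?M ! i), Inr (bin ?Q ! i)) \<in> ?P" by (rule UnI1)
    then have "h (Inl (bin ?M ! i)) = h (Inr (bin ?Q ! i))" by (rule quot_pair[OF q])
    then show ?thesis using Min[OF that] Qin[OF that] by simp
  qed
  have pout: "h (Inl (bout ?M ! i)) = h (Inr (k + i))" if "i < k" for i
  proof -
    have "(Inl (bout ?M ! i), Inr (bout ?Q ! i)) \<in> set (zip (map Inl (bout ?M)) (map Inr (bout ?Q)))"
      by (rule zip_pair_in) (use lens that in simp_all)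
    then have "(Inl (bout ?M ! i), Inr (bout ?Q ! i)) \<in> ?P" by (rule UnI2)
    then have "h (Inl (bout ?M ! i)) = h (Inr (bout ?Q ! i))" by (rule quot_pair[OF q])
    then show ?thesis using Qout[OF that] by simp
  qed
  have m1k: "m - 1 < k" "m - 1 < m" using m1 mk by simp_all
  have collapse: "h (Inl i) = h (Inl (m - 1))" if "m \<le> i" "i < k" for i
    using pin[OF that(2)] pin[OF m1k(1)] that m1k by simp
  have boutN: "bout ?N ! i = h (Inl (bout ?M ! i))" if "i < k" for i using that lens by (simp add: dunion_par_def)
  have binN: "bin ?N ! i = h (Inl i)" if "i < k" for i using that lens Min by (simp add: dunion_par_def)
  have lN: "length (bin ?N) = k" "length (bout ?N) = k" using lens by (simp_all add: dunion_par_def)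
  have I1: "bin ?N = map ((!) (bout ?N)) (Im k m)"
  proof (rule nth_equalityI)
    show "length (bin ?N) = length (map ((!) (bout ?N)) (Im k m))" using lN Im_len[OF mk] by simp
    fix i assume "i < length (bin ?N)"
    then have i: "i < k" using lN by simp
    show "bin ?N ! i = map ((!) (bout ?N)) (Im k m) ! i"
    proof (cases "i < m")
      case True
      then show ?thesis using i binN boutN Mout Im_nth[OF mk i] Im_len[OF mk] by simp
    next
      case False
      then have "bin ?N ! i = h (Inl (m - 1))" using collapse i binN by simp
      moreover have "map ((!) (bout ?N)) (Im k m) ! i = h (Inl (m - 1))"
        using i False Im_nth[OF mk i] Im_len[OF mk] boutN[OF m1k(1)] Mout[OF m1k(1)] m1k by simp
      ultimately show ?thesis by simp
    qed
  qed
  define \<phi> where "\<phi> x = (let v = (case x of Inl a \<Rightarrow> a | Inr b \<Rightarrow> b) in if v < m then v else if v < k then m - 1 else v - k)" for x :: "nat + nat"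
  have phi_out: "\<phi> (Inl (bout ?M ! i)) = i" if "i < k" for i
    using that Mout[OF that] by (simp add: \<phi>_def Let_def)
  have resp: "\<phi> x = \<phi> y" if xy: "(x, y) \<in> ?P" for x y
  proof (cases "(x, y) \<in> set (zip (map Inl (bin ?M)) (map Inr (bin ?Q)))")
    case True
    from zip_map_cases[OF True] obtain i where i: "i < length (bin ?M)" "x = Inl (bin ?M ! i)" "y = Inr (bin ?Q ! i)" by blast
    then have ik: "i < k" using lens by simp
    show ?thesis using i Min[OF ik] Qin[OF ik] ik m1k by (simp add: \<phi>_def Let_def)
  next
    case False
    then have "(x, y) \<in> set (zip (map Inl (bout ?M)) (map Inr (bout ?Q)))" using xy by simp
    from zip_map_cases[OF this] obtain i where i: "i < length (bout ?M)" "x = Inl (bout ?M ! i)" "y = Inr (bout ?Q ! i)" by blast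
    then have ik: "i < k" using lens by simp
    show ?thesis using i phi_out[OF ik] Qout[OF ik] ik mk by (simp add: \<phi>_def Let_def)
  qed
  have ker: "\<forall>x\<in>bV ?D. \<forall>y\<in>bV ?D. h x = h y \<longleftrightarrow> (x, y) \<in> eqc ?P" using q unfolding quot_iff by blast
  have outV: "bout ?M ! i \<in> bV ?M" if "i < k" for i
    using okM that lens unfolding okk_def by (metis nth_mem subsetD)
  have dist: "distinct (bout ?N)"
  proof (subst distinct_conv_nth, intro allI impI)
    fix i j assume i: "i < length (bout ?N)" and j: "j < length (bout ?N)" and ij: "i \<noteq> j"
    then have ik: "i < k" and jk: "j < k" using lN by simp_all
    show "bout ?N ! i \<noteq> bout ?N ! j"
    proof
      assume "bout ?N ! i = bout ?N ! j"
      then have "h (Inl (bout ?M ! i)) = h (Inl (bout ?M ! j))" using boutN ik jk by simp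
      then have "(Inl (bout ?M ! i), Inl (bout ?M ! j)) \<in> eqc ?P"
        using ker outV[OF ik] outV[OF jk] by (simp add: dunion_par_def)
      then have "\<phi> (Inl (bout ?M ! i)) = \<phi> (Inl (bout ?M ! j))" using resp by (rule eqc_respects)
      then show False using phi_out[OF ik] phi_out[OF jk] ij by simp
    qed
  qed
  have VN: "bV ?N = set (bout ?N)"
  proof (intro subset_antisym subsetI)
    fix y assume "y \<in> bV ?N"
    then obtain x where x: "x \<in> bV ?D" "y = h x" by auto
    have "\<exists>i<k. h x = h (Inl (bout ?M ! i))"
    proof (cases x)
      case (Inl a)
      then have a: "a < 2*k" "a \<notin> {k..<k+m}" using x by (auto simp: dunion_par_def Mprime_def)
      show ?thesis
      proof (cases "a < m")
        case True then show ?thesis using Inl Mout mk by (intro exI[of _ a]) auto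
      next
        case False
        show ?thesis
        proof (cases "a < k")
          case True then show ?thesis using Inl collapse[of a] False Mout[OF m1k(1)] m1k
            by (intro exI[of _ "m - 1"]) auto
        next
          case False
          then have "a - k < k" "\<not> a - k < m" using a by auto
          then show ?thesis using Inl Mout False by (intro exI[of _ "a - k"]) auto
        qed
      qed
    next
      case (Inr b)
      then have b: "b < 2*k" "b \<notin> {m..<k}" using x by (auto simp: dunion_par_def Qpp_def)
      show ?thesis
      proof (cases "b < m")
        case True
        then have "h x = h (Inl b)" using pin[of b] Inr mk by simp
        then show ?thesis using True Mout mk by (intro exI[of _ b]) auto
      next
        case False
        then have bk: "b - k < k" "k + (b - k) = b" using b by auto
        then have "h x = h (Inl (bout ?M ! (b - k)))" using pout[OF bk(1)] Inr by simp
        then show ?thesis using bk by blast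
      qed
    qed
    then show "y \<in> set (bout ?N)" using x boutN lN by (metis in_set_conv_nth)
  next
    fix y assume "y \<in> set (bout ?N)"
    then show "y \<in> bV ?N" using okk_img[OF okD, of h] unfolding okk_def by blast
  qed
  have EN: "bE ?N = {}" by (simp add: dunion_par_def Mprime_def Qpp_def)
  show ?thesis using NPP EN VN dist I1 by blast
qed

definition pin :: "nat bgr \<Rightarrow> nat \<Rightarrow> nat \<Rightarrow> nat list" where
  "pin T k m = take m (bin T) @ replicate (k - m) (bin T ! m)"
definition pout :: "nat bgr \<Rightarrow> nat \<Rightarrow> nat \<Rightarrow> nat list" where
  "pout T k m = take m (bout T) @ replicate (k - m) (bout T ! m)"
definition Pm :: "nat bgr \<Rightarrow> nat \<Rightarrow> (nat \<times> nat) set" where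
  "Pm T m = set (zip (drop m (bin T)) (drop m (bout T)))"

definition Stage :: "nat \<Rightarrow> nat bgr \<Rightarrow> nat \<Rightarrow> nat bgr \<Rightarrow> (nat \<Rightarrow> nat) \<Rightarrow> bool" where
  "Stage k T m G g \<longleftrightarrow> G \<in> PP k \<and> G = img g (T\<lparr>bin := pin T k m, bout := pout T k m\<rparr>) \<and>
     (\<forall>x\<in>bV T. \<forall>y\<in>bV T. g x = g y \<longleftrightarrow> (x, y) \<in> eqc (Pm T m))"

lemma img_upd_bin: "\<forall>i\<in>set I. i < length (bin X) \<Longrightarrow>
  (img g X)\<lparr>bin := map ((!) (bin (img g X))) I\<rparr> = img g (X\<lparr>bin := map ((!) (bin X)) I\<rparr>)"
  by (intro bgr_eqI) simp_all

lemma img_upd_bout: "\<forall>i\<in>set I. i < length (bout X) \<Longrightarrow>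
  (img g X)\<lparr>bout := map ((!) (bout (img g X))) I\<rparr> = img g (X\<lparr>bout := map ((!) (bout X)) I\<rparr>)"
  by (intro bgr_eqI) simp_all

lemma pin_nth: "length xs = k \<Longrightarrow> m \<le> k \<Longrightarrow> i < k \<Longrightarrow>
  (take m xs @ replicate (k - m) (xs ! m)) ! i = (if i < m then xs ! i else xs ! m)"
  by (simp add: nth_append min_def)

lemma pin_step:
  assumes l: "length xs = k" and m1: "1 \<le> m" and mk: "m \<le> k"
  shows "map ((!) (take m xs @ replicate (k - m) (xs ! m))) (Im k m) = take (m - 1) xs @ replicate (k - (m - 1)) (xs ! (m - 1))"
proof (rule nth_equalityI)
  show "length (map ((!) (take m xs @ replicate (k - m) (xs ! m))) (Im k m)) = length (take (m - 1) xs @ replicate (k - (m - 1)) (xs ! (m - 1)))"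
    using l m1 mk Im_len[OF mk] by simp
  fix i assume "i < length (map ((!) (take m xs @ replicate (k - m) (xs ! m))) (Im k m))"
  then have i: "i < k" using Im_len[OF mk] by simp
  have a: "Im k m ! i < k" using Im_nth[OF mk i] m1 mk i by simp arith
  have "map ((!) (take m xs @ replicate (k - m) (xs ! m))) (Im k m) ! i = (take m xs @ replicate (k - m) (xs ! m)) ! (Im k m ! i)"
    using i Im_len[OF mk] by simp
  also have "\<dots> = (if i < m then xs ! i else xs ! (m - 1))"
    using pin_nth[OF l mk a] Im_nth[OF mk i] m1 by simp
  also have "\<dots> = (take (m - 1) xs @ replicate (k - (m - 1)) (xs ! (m - 1))) ! i"
    using pin_nth[OF l _ i, of "m - 1"] mk by (cases "i = m - 1") auto
  finally show "map ((!) (take m xs @ replicate (k - m) (xs ! m))) (Im k m) ! i = (take (m - 1) xs @ replicate (k - (m - 1)) (xs ! (m - 1))) ! i" .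
qed

lemma Pm_step:
  assumes "m - 1 < length (bin T)" "m - 1 < length (bout T)" "1 \<le> m"
  shows "Pm T m \<union> {(bin T ! (m - 1), bout T ! (m - 1))} = Pm T (m - 1)"
proof -
  have "drop (m - 1) (bin T) = bin T ! (m - 1) # drop m (bin T)"
    using Cons_nth_drop_Suc[OF assms(1)] assms(3) by simp
  moreover have "drop (m - 1) (bout T) = bout T ! (m - 1) # drop m (bout T)"
    using Cons_nth_drop_Suc[OF assms(2)] assms(3) by simp
  ultimately show ?thesis unfolding Pm_def by auto
qed

lemma Pm_sub: "okk k T \<Longrightarrow> Pm T m \<subseteq> bV T \<times> bV T"
proof -
  assume ok: "okk k T"
  have "set (drop m (bin T)) \<subseteq> bV T" "set (drop m (bout T)) \<subseteq> bV T"
    using ok set_drop_subset unfolding okk_def by (metis subset_trans)+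
  then show ?thesis unfolding Pm_def by (rule zip_subset)
qed

lemma stage_base: "T \<in> PP k \<Longrightarrow> Stage k T k T id"
proof -
  assume T: "T \<in> PP k"
  then have ok: "okk k T" by (rule PP_okk)
  then have l: "length (bin T) = k" "length (bout T) = k" unfolding okk_def by simp_all
  have "T\<lparr>bin := pin T k k, bout := pout T k k\<rparr> = T" using l by (intro bgr_eqI) (simp_all add: pin_def pout_def)
  moreover have "img id T = T" by (intro bgr_eqI) simp_all
  moreover have "Pm T k = {}" using l by (simp add: Pm_def)
  ultimately show ?thesis unfolding Stage_def using T by (simp add: eqc_empty)
qed

lemma stage_step:
  assumes T: "T \<in> PP k" and m1: "1 \<le> m" and mk: "m \<le> k" and st: "Stage k T m G g"
  shows "\<exists>G' g'. Stage k T (m - 1) G' g'"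
proof -
  have okT: "okk k T" using T by (rule PP_okk)
  have lT: "length (bin T) = k" "length (bout T) = k" using okT unfolding okk_def by simp_all
  have G: "G \<in> PP k" and Gimg: "G = img g (T\<lparr>bin := pin T k m, bout := pout T k m\<rparr>)"
    and kerg: "\<forall>x\<in>bV T. \<forall>y\<in>bV T. g x = g y \<longleftrightarrow> (x, y) \<in> eqc (Pm T m)"
    using st unfolding Stage_def by blast+
  have okG: "okk k G" using G by (rule PP_okk)
  let ?I = "Im k m"
  have Ilt: "\<forall>i\<in>set ?I. i < k" by (rule Im_lt[OF m1 mk])
  obtain N where N: "N \<in> PP k" and EN: "bE N = {}" and VN: "bV N = set (bout N)"
    and dN: "distinct (bout N)" and inN: "bin N = map ((!) (bout N)) ?I"
    using N_exists[OF m1 mk] by blast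
  have okN: "okk k N" using N by (rule PP_okk)
  let ?D1 = "dunion_ser N G"
  let ?P1 = "set (zip (map Inl (bout N)) (map Inr (bin G)))"
  have okD1: "okk k ?D1" by (rule okk_dunion_ser[OF okN okG])
  obtain h1 :: "nat + nat \<Rightarrow> nat" where q1: "quot ?D1 ?P1 h1 (img h1 ?D1)"
    using quot_exists[of ?D1 ?P1] okD1 PV_ser[OF okN okG] unfolding okk_def by blast
  let ?G1 = "img h1 ?D1"
  have G1: "?G1 \<in> PP k" using PP.PP_series[OF N G] q1 unfolding series_def by blast
  have okG1: "okk k ?G1" using G1 by (rule PP_okk)
  have G1eq: "?G1 = img (h1 \<circ> Inr) (G\<lparr>bin := map ((!) (bin G)) ?I\<rparr>)" and inj1: "inj_on (h1 \<circ> Inr) (bV G)"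
    using relabel_left[OF q1 okN okG EN VN dN inN Ilt] by blast+
  let ?N' = "bstar N"
  have N': "?N' \<in> PP k" using N by (rule PP_star)
  have okN': "okk k ?N'" using N' by (rule PP_okk)
  let ?D2 = "dunion_ser ?G1 ?N'"
  let ?P2 = "set (zip (map Inl (bout ?G1)) (map Inr (bin ?N')))"
  have okD2: "okk k ?D2" by (rule okk_dunion_ser[OF okG1 okN'])
  obtain h2 :: "nat + nat \<Rightarrow> nat" where q2: "quot ?D2 ?P2 h2 (img h2 ?D2)"
    using quot_exists[of ?D2 ?P2] okD2 PV_ser[OF okG1 okN'] unfolding okk_def by blast
  let ?G2 = "img h2 ?D2"
  have G2: "?G2 \<in> PP k" using PP.PP_series[OF G1 N'] q2 unfolding series_def by blast
  have okG2: "okk k ?G2" using G2 by (rule PP_okk)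
  have EN': "bE ?N' = {}" and VN': "bV ?N' = set (bin ?N')" and dN': "distinct (bin ?N')"
    and outN': "bout ?N' = map ((!) (bin ?N')) ?I" using EN VN dN inN by simp_all
  have G2eq: "?G2 = img (h2 \<circ> Inl) (?G1\<lparr>bout := map ((!) (bout ?G1)) ?I\<rparr>)" and inj2: "inj_on (h2 \<circ> Inl) (bV ?G1)"
    using relabel_right[OF q2 okN' okG1 EN' VN' dN' outN' Ilt] by blast+
  have k1: "1 \<le> k" using m1 mk by simp
  have Q0: "Q0 k \<in> QP k" by (rule Q0_QP[OF k1])
  have okQ0: "okk k (Q0 k)" using PP_okk[OF PP.PP_base[OF UnI1[OF Q0]]] .
  let ?D3 = "dunion_par ?G2 (Q0 k)"
  let ?P3 = "set (zip (map Inl (bin ?G2)) (map Inr (bin (Q0 k)))) \<union> set (zip (map Inl (bout ?G2)) (map Inr (bout (Q0 k))))"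
  have okD3: "okk k ?D3" by (rule okk_dunion_par[OF okG2 okQ0])
  obtain h3 :: "nat + nat \<Rightarrow> nat" where q3: "quot ?D3 ?P3 h3 (img h3 ?D3)"
    using quot_exists[of ?D3 ?P3] okD3 PV_par[OF okG2 okQ0] unfolding okk_def by blast
  let ?G3 = "img h3 ?D3"
  have G3: "?G3 \<in> PP k" using PP.PP_parallel[OF G2 Q0] q3 unfolding parallel_def by blast
  have G3eq: "?G3 = img (h3 \<circ> Inl) ?G2"
    and ker3: "\<forall>a\<in>bV ?G2. \<forall>b\<in>bV ?G2. h3 (Inl a) = h3 (Inl b) \<longleftrightarrow> (a, b) \<in> eqc {(bin ?G2 ! (k - 1), bout ?G2 ! (k - 1))}"
    using merge_lemma[OF k1 okG2 q3] by blast+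
  let ?Tm = "T\<lparr>bin := pin T k m, bout := pout T k m\<rparr>"
  let ?T' = "T\<lparr>bin := pin T k (m - 1), bout := pout T k (m - 1)\<rparr>"
  define c where "c = h2 \<circ> Inl \<circ> h1 \<circ> Inr \<circ> g"
  have lpin: "length (pin T k m) = k" "length (pout T k m) = k" using lT mk by (simp_all add: pin_def pout_def)
  have G1eq': "?G1 = img (h1 \<circ> Inr \<circ> g) (?Tm\<lparr>bin := map ((!) (pin T k m)) ?I\<rparr>)"
  proof -
    have "G\<lparr>bin := map ((!) (bin G)) ?I\<rparr> = img g (?Tm\<lparr>bin := map ((!) (bin ?Tm)) ?I\<rparr>)"
      unfolding Gimg by (rule img_upd_bin) (use Ilt lpin in simp)
    then show ?thesis using G1eq by (simp add: img_img comp_assoc)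
  qed
  have G2eq': "?G2 = img c ?T'"
  proof -
    have "?G1\<lparr>bout := map ((!) (bout ?G1)) ?I\<rparr> = img (h1 \<circ> Inr \<circ> g) ((?Tm\<lparr>bin := map ((!) (pin T k m)) ?I\<rparr>)\<lparr>bout := map ((!) (bout (?Tm\<lparr>bin := map ((!) (pin T k m)) ?I\<rparr>))) ?I\<rparr>)"
      unfolding G1eq' by (rule img_upd_bout) (use Ilt lpin in simp)
    also have "(?Tm\<lparr>bin := map ((!) (pin T k m)) ?I\<rparr>)\<lparr>bout := map ((!) (bout (?Tm\<lparr>bin := map ((!) (pin T k m)) ?I\<rparr>))) ?I\<rparr> = ?T'"
      using pin_step[OF lT(1) m1 mk] pin_step[OF lT(2) m1 mk]
      by (intro bgr_eqI) (simp_all add: pin_def pout_def)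
    finally show ?thesis using G2eq unfolding c_def by (simp add: img_img comp_assoc)
  qed
  have VG: "bV G = g ` bV T" using Gimg by simp
  have VG1: "bV ?G1 = (h1 \<circ> Inr) ` bV G" using G1eq by simp
  have kerc: "\<forall>x\<in>bV T. \<forall>y\<in>bV T. c x = c y \<longleftrightarrow> (x, y) \<in> eqc (Pm T m)"
  proof (intro ballI)
    fix x y assume x: "x \<in> bV T" and y: "y \<in> bV T"
    have gx: "g x \<in> bV G" "g y \<in> bV G" using VG x y by simp_all
    have hx: "h1 (Inr (g x)) \<in> bV ?G1" "h1 (Inr (g y)) \<in> bV ?G1" using VG1 gx by auto
    have "c x = c y \<longleftrightarrow> h1 (Inr (g x)) = h1 (Inr (g y))"
      using inj_on_eq_iff[OF inj2 hx] unfolding c_def by simp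
    also have "\<dots> \<longleftrightarrow> g x = g y" using inj_on_eq_iff[OF inj1 gx] by simp
    finally show "c x = c y \<longleftrightarrow> (x, y) \<in> eqc (Pm T m)" using kerg x y by simp
  qed
  let ?Q = "{(bin T ! (m - 1), bout T ! (m - 1))}"
  have mk1: "m - 1 < k" using m1 mk by simp
  have QV: "?Q \<subseteq> bV T \<times> bV T" using okT mk1 lT unfolding okk_def by (simp add: subset_iff)
  have VG2: "bV ?G2 = c ` bV T" using G2eq' by simp
  have labs: "bin ?G2 ! (k - 1) = c (bin T ! (m - 1))" "bout ?G2 ! (k - 1) = c (bout T ! (m - 1))"
  proof -
    have k1': "k - 1 < k" using k1 by simp
    have "pin T k (m - 1) ! (k - 1) = bin T ! (m - 1)" unfolding pin_def using pin_nth[OF lT(1) _ k1', of "m - 1"] mk by simp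
    moreover have "pout T k (m - 1) ! (k - 1) = bout T ! (m - 1)" unfolding pout_def using pin_nth[OF lT(2) _ k1', of "m - 1"] mk by simp
    moreover have "length (pin T k (m - 1)) = k" "length (pout T k (m - 1)) = k" using lT mk by (simp_all add: pin_def pout_def)
    ultimately show "bin ?G2 ! (k - 1) = c (bin T ! (m - 1))" "bout ?G2 ! (k - 1) = c (bout T ! (m - 1))"
      using G2eq' k1' by (simp_all only: img_sel) simp_all
  qed
  have ker3': "\<forall>u\<in>c ` bV T. \<forall>v\<in>c ` bV T. (h3 \<circ> Inl) u = (h3 \<circ> Inl) v \<longleftrightarrow> (u, v) \<in> eqc ((\<lambda>(a, b). (c a, c b)) ` ?Q)"
  proof (intro ballI)
    fix u v assume u: "u \<in> c ` bV T" and v: "v \<in> c ` bV T"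
    have uG: "u \<in> bV ?G2" and vG: "v \<in> bV ?G2" using u v VG2 by (simp_all only:)
    have "h3 (Inl u) = h3 (Inl v) \<longleftrightarrow> (u, v) \<in> eqc {(bin ?G2 ! (k - 1), bout ?G2 ! (k - 1))}"
      by (rule ker3[rule_format, OF uG vG])
    then show "(h3 \<circ> Inl) u = (h3 \<circ> Inl) v \<longleftrightarrow> (u, v) \<in> eqc ((\<lambda>(a, b). (c a, c b)) ` ?Q)"
      by (simp only: labs) simp
  qed
  have kfin: "\<forall>x\<in>bV T. \<forall>y\<in>bV T. (h3 \<circ> Inl) (c x) = (h3 \<circ> Inl) (c y) \<longleftrightarrow> (x, y) \<in> eqc (Pm T m \<union> ?Q)"
    by (rule comp_kernel[OF Pm_sub[OF okT] QV kerc ker3'])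
  have "Pm T m \<union> ?Q = Pm T (m - 1)" by (rule Pm_step) (use lT mk1 m1 in simp_all)
  then have kfin': "\<forall>x\<in>bV T. \<forall>y\<in>bV T. ((h3 \<circ> Inl) \<circ> c) x = ((h3 \<circ> Inl) \<circ> c) y \<longleftrightarrow> (x, y) \<in> eqc (Pm T (m - 1))"
    using kfin by simp
  have "?G3 = img ((h3 \<circ> Inl) \<circ> c) ?T'" using G3eq G2eq' by (simp add: img_img)
  then have "Stage k T (m - 1) ?G3 ((h3 \<circ> Inl) \<circ> c)" unfolding Stage_def using G3 kfin' by blast
  then show ?thesis by blast
qed

lemma stage_all: "T \<in> PP k \<Longrightarrow> n \<le> k \<Longrightarrow> \<exists>G g. Stage k T (k - n) G g"
proof (induction n)
  case 0 then show ?case using stage_base by auto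
next
  case (Suc n)
  then obtain G g where "Stage k T (k - n) G g" by auto
  moreover have "1 \<le> k - n" "k - n \<le> k" using Suc.prems by simp_all
  ultimately obtain G' g' where "Stage k T (k - n - 1) G' g'" using stage_step[OF Suc.prems(1)] by blast
  moreover have "k - n - 1 = k - Suc n" by simp
  ultimately show ?case by metis
qed

lemma zipper:
  assumes T: "T \<in> PP k"
  shows "\<exists>Q\<in>PP k. \<exists>g. bV Q = g ` bV T \<and> bE Q = (\<lambda>e. g ` e) ` bE T \<and>
     (\<forall>x\<in>bV T. \<forall>y\<in>bV T. g x = g y \<longleftrightarrow> (x, y) \<in> eqc (set (zip (bin T) (bout T))))"
proof -
  obtain G g where st: "Stage k T 0 G g" using stage_all[OF T, of k] by auto
  then have G: "G \<in> PP k" and Gi: "G = img g (T\<lparr>bin := pin T k 0, bout := pout T k 0\<rparr>)"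
    and ker: "\<forall>x\<in>bV T. \<forall>y\<in>bV T. g x = g y \<longleftrightarrow> (x, y) \<in> eqc (Pm T 0)"
    unfolding Stage_def by blast+
  have "bV G = g ` bV T" "bE G = (\<lambda>e. g ` e) ` bE T" using Gi by simp_all
  moreover have "Pm T 0 = set (zip (bin T) (bout T))" by (simp add: Pm_def)
  ultimately show ?thesis using G ker by metis
qed

lemma trace_kernel:
  assumes okD: "okk k D" and q: "quot D P h T" and PV: "P \<subseteq> bV D \<times> bV D"
    and h2: "\<forall>u\<in>bV T. \<forall>v\<in>bV T. h2 u = h2 v \<longleftrightarrow> (u, v) \<in> eqc (set (zip (bin T) (bout T)))"
  shows "\<forall>x\<in>bV D. \<forall>y\<in>bV D. h2 (h x) = h2 (h y) \<longleftrightarrow> (x, y) \<in> eqc (P \<union> set (zip (bin D) (bout D)))"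
proof -
  have T: "T = img h D" and ker: "\<forall>x\<in>bV D. \<forall>y\<in>bV D. h x = h y \<longleftrightarrow> (x, y) \<in> eqc P"
    using q unfolding quot_iff by blast+
  have QV: "set (zip (bin D) (bout D)) \<subseteq> bV D \<times> bV D" using okD unfolding okk_def by (intro zip_subset) simp_all
  have z: "set (zip (bin T) (bout T)) = (\<lambda>(a, b). (h a, h b)) ` set (zip (bin D) (bout D))"
    using T by (simp add: set_zip_map[symmetric])
  have f: "\<forall>u\<in>h ` bV D. \<forall>v\<in>h ` bV D. h2 u = h2 v \<longleftrightarrow> (u, v) \<in> eqc ((\<lambda>(a, b). (h a, h b)) ` set (zip (bin D) (bout D)))"
    using h2 T z by simp
  show ?thesis by (rule comp_kernel[OF PV QV ker f])
qed

theorem lemma4p2: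
  fixes k :: nat and R S :: "nat bgr"
  assumes "R \<in> PP k" and "S \<in> PP k"
  shows "\<exists>Q\<in>PP k.
           (\<exists>(T :: nat bgr) (X :: nat set \<times> nat set set).
               series (bstar R) S T \<and> btr T X \<and> iso_u X (underlying Q))
         \<and> (\<forall>(T :: nat bgr) (X :: nat set \<times> nat set set).
               series (bstar R) S T \<longrightarrow> btr T X \<longrightarrow> iso_u X (underlying Q))"
proof -
  have R': "bstar R \<in> PP k" using assms(1) by (rule PP_star)
  have okR': "okk k (bstar R)" and okS: "okk k S" using R' assms(2) by (simp_all add: PP_okk)
  let ?D = "dunion_ser (bstar R) S"
  let ?P = "set (zip (map Inl (bout (bstar R))) (map Inr (bin S)))"
  let ?Ptr = "set (zip (bin ?D) (bout ?D))"
  have okD: "okk k ?D" by (rule okk_dunion_ser[OF okR' okS])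
  have PV: "?P \<subseteq> bV ?D \<times> bV ?D" by (rule PV_ser[OF okR' okS])
  obtain h0 :: "nat + nat \<Rightarrow> nat" where q0: "quot ?D ?P h0 (img h0 ?D)"
    using quot_exists[of ?D ?P] okD PV unfolding okk_def by blast
  let ?T0 = "img h0 ?D"
  have ser0: "series (bstar R) S ?T0" unfolding series_def using q0 by blast
  have T0: "?T0 \<in> PP k" by (rule PP.PP_series[OF R' assms(2) ser0])
  have okT0: "okk k ?T0" using T0 by (rule PP_okk)
  obtain Q where Q: "Q \<in> PP k" and exg: "\<exists>g. bV Q = g ` bV ?T0 \<and> bE Q = (\<lambda>e. g ` e) ` bE ?T0 \<and>
     (\<forall>x\<in>bV ?T0. \<forall>y\<in>bV ?T0. g x = g y \<longleftrightarrow> (x, y) \<in> eqc (set (zip (bin ?T0) (bout ?T0))))"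
    by (rule bexE[OF zipper[OF T0]])
  obtain g0 where g0: "bV Q = g0 ` bV ?T0 \<and> bE Q = (\<lambda>e. g0 ` e) ` bE ?T0 \<and>
     (\<forall>x\<in>bV ?T0. \<forall>y\<in>bV ?T0. g0 x = g0 y \<longleftrightarrow> (x, y) \<in> eqc (set (zip (bin ?T0) (bout ?T0))))"
    by (rule exE[OF exg])
  have VQ: "bV Q = g0 ` bV ?T0" and EQ: "bE Q = (\<lambda>e. g0 ` e) ` bE ?T0"
    and kg0: "\<forall>x\<in>bV ?T0. \<forall>y\<in>bV ?T0. g0 x = g0 y \<longleftrightarrow> (x, y) \<in> eqc (set (zip (bin ?T0) (bout ?T0)))"
    using g0 by simp_all
  have kQ: "\<forall>x\<in>bV ?D. \<forall>y\<in>bV ?D. g0 (h0 x) = g0 (h0 y) \<longleftrightarrow> (x, y) \<in> eqc (?P \<union> ?Ptr)"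
    by (rule trace_kernel[OF okD q0 PV kg0])
  have uQ: "underlying Q = ((g0 \<circ> h0) ` bV ?D, (\<lambda>e. (g0 \<circ> h0) ` e) ` bE ?D)"
    unfolding underlying_def VQ EQ by (simp add: image_comp)
  have univ: "\<forall>(T :: nat bgr) (X :: nat set \<times> nat set set).
               series (bstar R) S T \<longrightarrow> btr T X \<longrightarrow> iso_u X (underlying Q)"
  proof (intro allI impI)
    fix T :: "nat bgr" and X :: "nat set \<times> nat set set"
    assume s: "series (bstar R) S T" and b: "btr T X"
    obtain h where q: "quot ?D ?P h T" using s unfolding series_def by blast
    obtain h2 where q2: "quot T (set (zip (bin T) (bout T))) h2
       \<lparr>bV = fst X, bE = snd X, bin = map h2 (bin T), bout = map h2 (bout T)\<rparr>"
      using b unfolding btr_def by blast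
    have Xi: "\<lparr>bV = fst X, bE = snd X, bin = map h2 (bin T), bout = map h2 (bout T)\<rparr> = img h2 T"
      and k2: "\<forall>u\<in>bV T. \<forall>v\<in>bV T. h2 u = h2 v \<longleftrightarrow> (u, v) \<in> eqc (set (zip (bin T) (bout T)))"
      using q2 unfolding quot_iff by blast+
    have T: "T = img h ?D" using q unfolding quot_iff by blast
    have fX: "fst X = (h2 \<circ> h) ` bV ?D" and sX: "snd X = (\<lambda>e. (h2 \<circ> h) ` e) ` bE ?D"
    proof -
      have "fst X = bV (img h2 T)" "snd X = bE (img h2 T)" using Xi by (metis bgr.select_convs(1), metis bgr.select_convs(2))
      then show "fst X = (h2 \<circ> h) ` bV ?D" "snd X = (\<lambda>e. (h2 \<circ> h) ` e) ` bE ?D" using T by (simp_all add: image_comp)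
    qed
    have kX: "\<forall>x\<in>bV ?D. \<forall>y\<in>bV ?D. h2 (h x) = h2 (h y) \<longleftrightarrow> (x, y) \<in> eqc (?P \<union> ?Ptr)"
      by (rule trace_kernel[OF okD q PV k2])
    have kk: "\<forall>x\<in>bV ?D. \<forall>y\<in>bV ?D. (h2 \<circ> h) x = (h2 \<circ> h) y \<longleftrightarrow> (g0 \<circ> h0) x = (g0 \<circ> h0) y"
      using kX kQ by simp
    have "iso_u ((h2 \<circ> h) ` bV ?D, (\<lambda>e. (h2 \<circ> h) ` e) ` bE ?D) ((g0 \<circ> h0) ` bV ?D, (\<lambda>e. (g0 \<circ> h0) ` e) ` bE ?D)"
      by (rule kernel_iso(2)[OF okD kk])
    moreover have "X = ((h2 \<circ> h) ` bV ?D, (\<lambda>e. (h2 \<circ> h) ` e) ` bE ?D)" using fX sX by (metis prod.collapse)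
    ultimately show "iso_u X (underlying Q)" using uQ by simp
  qed
  have PV0: "set (zip (bin ?T0) (bout ?T0)) \<subseteq> bV ?T0 \<times> bV ?T0"
    using okT0 unfolding okk_def by (intro zip_subset) simp_all
  obtain h2 :: "nat \<Rightarrow> nat" where q2: "quot ?T0 (set (zip (bin ?T0) (bout ?T0))) h2 (img h2 ?T0)"
    using quot_exists[of ?T0 "set (zip (bin ?T0) (bout ?T0))"] okT0 PV0 unfolding okk_def by blast
  let ?X0 = "(bV (img h2 ?T0), bE (img h2 ?T0))"
  have "\<lparr>bV = fst ?X0, bE = snd ?X0, bin = map h2 (bin ?T0), bout = map h2 (bout ?T0)\<rparr> = img h2 ?T0"
    by (intro bgr_eqI) simp_all
  then have b0: "btr ?T0 ?X0" unfolding btr_def using q2 by metis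
  have "iso_u ?X0 (underlying Q)" using univ ser0 b0 by blast
  then have "\<exists>(T :: nat bgr) (X :: nat set \<times> nat set set).
               series (bstar R) S T \<and> btr T X \<and> iso_u X (underlying Q)" using ser0 b0 by blast
  then show ?thesis using Q univ by blast
qed

end
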